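(* Let $m\geq 2$ and let $\mathbb{H}^m=(B^m,g)$ be the hyperbolic space, where $B^m$ is the open unit ball of $\mathbb{R}^m$ centred at $0$ and $g=4|dx|^2/(1-|x|^2)^2$. Let $r(x)=\log\left(\frac{1+|x|}{1-|x|}\right)$ be the $g$-distance from $x$ to $0$. Let $c\in\mathbb{R}$ be any constant and define $f_c:\mathbb{H}^m\to\mathbb{R}$ by \[ f_c(x)=\int_0^{r(x)}\frac{A_c(s)}{\sqrt{1+A_c(s)^2}}\,ds,\qquad A_c(s)=\frac{c}{(\sinh s)^{m-1}}\int_0^s(\sinh t)^{m-1}\,dt . \] Then $f_c$ is smooth on all of $\mathbb{H}^m$, and for each $d\in\mathbb{R}$ the graph $\Gamma_{f_c+d}\subset\mathbb{H}^m\times\mathbb{R}$ is a spacelike hypersurface of the Lorentzian product $(\mathbb{H}^m\times\mathbb{R},\,g-dt^2)$ with constant mean curvature $\langle H,\nu\rangle=\frac{c}{m}$. Furthermore, $\{\Gamma_{f_c+d}(x):\ x\in\mathbb{H}^m,\ d\in\mathbb{R}\}$ defines a foliation of $\mathbb{H}^m\times\mathbb{R}$ by hypersurfaces of constant mean curvature.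
   Context: For $f:M\to\mathbb{R}$, $\Gamma_f(x)=(x,f(x))$ and $\Gamma_f$ also denotes its image. The graph is spacelike iff the induced metric $g-df\otimes df$ is Riemannian, i.e. $\|\nabla f\|_g<1$. $H$ is the mean curvature vector (trace of the second fundamental form divided by $m$), $\langle\cdot,\cdot\rangle$ is the metric $g-dt^2$, and $\nu=-\frac{(\nabla f,1)}{\sqrt{1-\|\nabla f\|^2}}$ is the unit timelike normal of the graph of $f=f_c+d$, where $\nabla f$ is the $g$-gradient and $1=\partial_t$. *)

theory Defs
  imports "HOL-Analysis.Analysis"
begin

fun ddir :: "('a::real_normed_vector \<Rightarrow> 'b::real_normed_vector) \<Rightarrow> 'a list \<Rightarrow> 'a \<Rightarrow> 'b" where
  "ddir f [] = f"
| "ddir f (v # vs) = (\<lambda>x. frechet_derivative (ddir f vs) (at x) v)"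

definition smooth_on :: "'a::real_normed_vector set \<Rightarrow> ('a \<Rightarrow> 'b::real_normed_vector) \<Rightarrow> bool" where
  "smooth_on S f \<longleftrightarrow> (\<forall>vs. ddir f vs differentiable_on S)"

definition ball_model :: "(real^'m) set" where
  "ball_model = ball 0 1"

definition hyp_metric :: "real^'m \<Rightarrow> real^'m \<Rightarrow> real^'m \<Rightarrow> real" where
  "hyp_metric x u v = 4 * (u \<bullet> v) / (1 - (norm x)\<^sup>2)\<^sup>2"

definition hyp_dist0 :: "real^'m \<Rightarrow> real" where
  "hyp_dist0 x = ln ((1 + norm x) / (1 - norm x))"

definition lor_metric :: "(real^'m) \<times> real \<Rightarrow> (real^'m) \<times> real \<Rightarrow> (real^'m) \<times> real \<Rightarrow> real" where
  "lor_metric p u v = hyp_metric (fst p) (fst u) (fst v) - snd u * snd v"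

text \<open>G p u v is the metric at p applied to the (constant coordinate) vectors u, v.
  The Christoffel map is determined by the Koszul formula for constant vector fields.\<close>
definition christoffel ::
  "('a::euclidean_space \<Rightarrow> 'a \<Rightarrow> 'a \<Rightarrow> real) \<Rightarrow> 'a \<Rightarrow> 'a \<Rightarrow> 'a \<Rightarrow> 'a" where
  "christoffel G p u v = (THE z. \<forall>w. G p z w =
      (frechet_derivative (\<lambda>q. G q v w) (at p) u
     + frechet_derivative (\<lambda>q. G q u w) (at p) v
     - frechet_derivative (\<lambda>q. G q u v) (at p) w) / 2)"

definition cov_deriv_imm ::
  "('a::euclidean_space \<Rightarrow> 'a \<Rightarrow> 'a \<Rightarrow> real) \<Rightarrow> ('b::euclidean_space \<Rightarrow> 'a) \<Rightarrow> 'b \<Rightarrow> 'b \<Rightarrow> 'b \<Rightarrow> 'a" where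
  "cov_deriv_imm G F x u v =
     frechet_derivative (\<lambda>y. frechet_derivative F (at y) v) (at x) u
     + christoffel G (F x) (frechet_derivative F (at x) u) (frechet_derivative F (at x) v)"

definition graph_map :: "(real^'m \<Rightarrow> real) \<Rightarrow> real^'m \<Rightarrow> (real^'m) \<times> real" where
  "graph_map f x = (x, f x)"

definition induced_metric :: "(real^'m \<Rightarrow> real) \<Rightarrow> real^'m \<Rightarrow> real^'m^'m" where
  "induced_metric f x = (\<chi> i j. lor_metric (graph_map f x)
       (frechet_derivative (graph_map f) (at x) (axis i 1))
       (frechet_derivative (graph_map f) (at x) (axis j 1)))"

definition spacelike_graph :: "(real^'m \<Rightarrow> real) \<Rightarrow> bool" where
  "spacelike_graph f \<longleftrightarrow> (\<forall>x\<in>ball_model. \<forall>u. u \<noteq> 0 \<longrightarrow>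
      lor_metric (graph_map f x) (frechet_derivative (graph_map f) (at x) u)
                                 (frechet_derivative (graph_map f) (at x) u) > 0)"

definition hyp_grad :: "(real^'m \<Rightarrow> real) \<Rightarrow> real^'m \<Rightarrow> real^'m" where
  "hyp_grad f x = ((1 - (norm x)\<^sup>2)\<^sup>2 / 4) *\<^sub>R (\<chi> i. frechet_derivative f (at x) (axis i 1))"

definition hyp_grad_norm :: "(real^'m \<Rightarrow> real) \<Rightarrow> real^'m \<Rightarrow> real" where
  "hyp_grad_norm f x = sqrt (hyp_metric x (hyp_grad f x) (hyp_grad f x))"

definition unit_normal :: "(real^'m \<Rightarrow> real) \<Rightarrow> real^'m \<Rightarrow> (real^'m) \<times> real" where
  "unit_normal f x = - ((1 / sqrt (1 - (hyp_grad_norm f x)\<^sup>2)) *\<^sub>R (hyp_grad f x, 1))"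

definition sff :: "(real^'m \<Rightarrow> real) \<Rightarrow> real^'m \<Rightarrow> real^'m \<Rightarrow> real^'m \<Rightarrow> (real^'m) \<times> real" where
  "sff f x u v = (let N = unit_normal f x; p = graph_map f x in
      (lor_metric p (cov_deriv_imm lor_metric (graph_map f) x u v) N / lor_metric p N N) *\<^sub>R N)"

definition mean_curv_vec :: "(real^'m \<Rightarrow> real) \<Rightarrow> real^'m \<Rightarrow> (real^'m) \<times> real" where
  "mean_curv_vec f x = (1 / real CARD('m)) *\<^sub>R
      (\<Sum>i\<in>UNIV. \<Sum>j\<in>UNIV. (matrix_inv (induced_metric f x) $ i $ j) *\<^sub>R sff f x (axis i 1) (axis j 1))"

definition A_fun :: "nat \<Rightarrow> real \<Rightarrow> real \<Rightarrow> real" where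
  "A_fun m c s = c / (sinh s) ^ (m - 1) * integral {0..s} (\<lambda>t. (sinh t) ^ (m - 1))"

definition f_fun :: "real \<Rightarrow> real^'m \<Rightarrow> real" where
  "f_fun c x = integral {0..hyp_dist0 x}
      (\<lambda>s. A_fun CARD('m) c s / sqrt (1 + (A_fun CARD('m) c s)\<^sup>2))"

end

theory Submission
  imports Defs
begin

fun Cn :: "nat \<Rightarrow> real set \<Rightarrow> (real \<Rightarrow> real) \<Rightarrow> bool" where
  "Cn 0 T f = True"
| "Cn (Suc n) T f = (\<exists>f'. (\<forall>x\<in>T. (f has_real_derivative f' x) (at x)) \<and> Cn n T f')"

lemma Cn_mono: "Cn (Suc n) T f \<Longrightarrow> Cn n T f"
proof (induction n arbitrary: f)
  case 0 then show ?case by simp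
next
  case (Suc n)
  then obtain f' where "\<forall>x\<in>T. (f has_real_derivative f' x) (at x)" "Cn (Suc n) T f'" by auto
  then show ?case using Suc.IH by auto
qed

lemma Cn_le: "m \<le> n \<Longrightarrow> Cn n T f \<Longrightarrow> Cn m T f"
proof (induction n rule: dec_induct)
  case (step k) then show ?case using Cn_mono by blast
qed simp

lemma Cn_transform: "open T \<Longrightarrow> Cn n T f \<Longrightarrow> (\<And>x. x \<in> T \<Longrightarrow> f x = g x) \<Longrightarrow> Cn n T g"
proof (cases n)
  case (Suc k)
  assume "open T" "Cn n T f" and eq: "\<And>x. x \<in> T \<Longrightarrow> f x = g x"
  then obtain f' where d: "\<forall>x\<in>T. (f has_real_derivative f' x) (at x)" "Cn k T f'" using Suc by auto
  have "\<forall>x\<in>T. (g has_real_derivative f' x) (at x)"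
  proof
    fix x assume "x \<in> T"
    then show "(g has_real_derivative f' x) (at x)"
      using has_field_derivative_transform_within_open[OF _ \<open>open T\<close> \<open>x\<in>T\<close>] d eq by metis
  qed
  then show ?thesis using Suc d by auto
qed simp

lemma Cn_const: "Cn n T (\<lambda>x. a)"
  by (induction n arbitrary: a) (auto intro!: exI[of _ "\<lambda>x. 0"] derivative_eq_intros)

lemma Cn_add: "Cn n T f \<Longrightarrow> Cn n T g \<Longrightarrow> Cn n T (\<lambda>x. f x + g x)"
proof (induction n arbitrary: f g)
  case (Suc n)
  then obtain f' g' where "\<forall>x\<in>T. (f has_real_derivative f' x) (at x)" "Cn n T f'"
      "\<forall>x\<in>T. (g has_real_derivative g' x) (at x)" "Cn n T g'" by auto
  then show ?case using Suc.IH
    by (auto intro!: exI[of _ "\<lambda>x. f' x + g' x"] derivative_eq_intros)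
qed simp

lemma Cn_mult: "Cn n T f \<Longrightarrow> Cn n T g \<Longrightarrow> Cn n T (\<lambda>x. f x * g x)"
proof (induction n arbitrary: f g)
  case (Suc n)
  then obtain f' g' where d: "\<forall>x\<in>T. (f has_real_derivative f' x) (at x)" "Cn n T f'"
      "\<forall>x\<in>T. (g has_real_derivative g' x) (at x)" "Cn n T g'" by auto
  have "Cn n T f" "Cn n T g" using Suc.prems Cn_mono by blast+
  then have "Cn n T (\<lambda>x. f' x * g x + f x * g' x)" using Suc.IH d Cn_add by blast
  moreover have "\<forall>x\<in>T. ((\<lambda>x. f x * g x) has_real_derivative (f' x * g x + f x * g' x)) (at x)"
    using d by (auto intro!: derivative_eq_intros)
  ultimately show ?case by auto
qed simp

lemma Cn_id: "Cn n T (\<lambda>x. x)"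
proof (cases n)
  case (Suc k) then show ?thesis by (auto intro!: exI[of _ "\<lambda>x. 1"] derivative_eq_intros Cn_const)
qed simp

lemma Cn_compose: "Cn n T g \<Longrightarrow> Cn n S h \<Longrightarrow> g ` T \<subseteq> S \<Longrightarrow> Cn n T (\<lambda>x. h (g x))"
proof (induction n arbitrary: g h)
  case (Suc n)
  then obtain g' h' where d: "\<forall>x\<in>T. (g has_real_derivative g' x) (at x)" "Cn n T g'"
      "\<forall>x\<in>S. (h has_real_derivative h' x) (at x)" "Cn n S h'" by auto
  have "Cn n T g" using Suc.prems Cn_mono by blast
  then have "Cn n T (\<lambda>x. h' (g x))" using Suc.IH d Suc.prems by blast
  then have "Cn n T (\<lambda>x. h' (g x) * g' x)" using d Cn_mult by blast
  moreover have "\<forall>x\<in>T. ((\<lambda>x. h (g x)) has_real_derivative (h' (g x) * g' x)) (at x)"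
  proof
    fix x assume "x \<in> T"
    then have "g x \<in> S" using Suc.prems by auto
    then show "((\<lambda>x. h (g x)) has_real_derivative (h' (g x) * g' x)) (at x)"
      using d \<open>x\<in>T\<close> DERIV_chain2 by blast
  qed
  ultimately show ?case by auto
qed simp

lemma Cn_scale: "Cn n T f \<Longrightarrow> Cn n T (\<lambda>x. a * f x)"
  using Cn_mult[OF Cn_const] by blast

lemma Cn_diff: "Cn n T f \<Longrightarrow> Cn n T g \<Longrightarrow> Cn n T (\<lambda>x. f x - g x)"
proof -
  assume a: "Cn n T f" "Cn n T g"
  have "Cn n T (\<lambda>x. (-1) * g x)" using a(2) by (rule Cn_scale)
  from Cn_add[OF a(1) this] show ?thesis by simp
qed

lemma Cn_power: "Cn n T f \<Longrightarrow> Cn n T (\<lambda>x. f x ^ k)"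
  by (induction k) (auto intro: Cn_const Cn_mult)

lemma Cn_inverse_pos: "Cn n {0<..} (\<lambda>x::real. inverse x)"
proof (induction n)
  case (Suc n)
  have "Cn n {0<..} (\<lambda>x::real. - (inverse x * inverse x))"
    using Cn_scale[OF Cn_mult[OF Suc.IH Suc.IH], of "-1"] by simp
  moreover have "\<forall>x\<in>{0<..}. ((\<lambda>x::real. inverse x) has_real_derivative (- (inverse x * inverse x))) (at x)"
    by (auto intro!: derivative_eq_intros simp: power2_eq_square)
  ultimately show ?case by auto
qed simp

lemma Cn_sqrt_pos: "Cn n {0<..} (\<lambda>x::real. sqrt x)"
proof (induction n)
  case (Suc n)
  have "Cn n {0<..} (\<lambda>x::real. inverse (sqrt x))"
    using Cn_compose[OF Suc.IH Cn_inverse_pos] by (auto simp: image_subset_iff)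
  then have "Cn n {0<..} (\<lambda>x::real. inverse 2 * inverse (sqrt x))" by (rule Cn_scale)
  moreover have "\<forall>x\<in>{0<..}. ((\<lambda>x::real. sqrt x) has_real_derivative (inverse 2 * inverse (sqrt x))) (at x)"
    by (auto intro!: derivative_eq_intros simp: field_simps)
  ultimately show ?case by auto
qed simp

lemma Cn_divide: "Cn n T f \<Longrightarrow> Cn n T g \<Longrightarrow> (\<And>x. x \<in> T \<Longrightarrow> g x > 0) \<Longrightarrow> Cn n T (\<lambda>x. f x / g x)"
proof -
  assume a: "Cn n T f" "Cn n T g" "\<And>x. x \<in> T \<Longrightarrow> g x > 0"
  have "Cn n T (\<lambda>x. inverse (g x))" using Cn_compose[OF a(2) Cn_inverse_pos] a(3) by (auto simp: image_subset_iff)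
  from Cn_mult[OF a(1) this] show ?thesis by (simp add: divide_inverse)
qed

lemma Cn_sqrt: "Cn n T g \<Longrightarrow> (\<And>x. x \<in> T \<Longrightarrow> g x > 0) \<Longrightarrow> Cn n T (\<lambda>x. sqrt (g x))"
  using Cn_compose[OF _ Cn_sqrt_pos] by (auto simp: image_subset_iff)

definition smooth1 :: "real set \<Rightarrow> (real \<Rightarrow> real) \<Rightarrow> bool" where
  "smooth1 T f \<longleftrightarrow> (\<forall>n. Cn n T f)"

definition Jk :: "nat \<Rightarrow> nat \<Rightarrow> real \<Rightarrow> real" where
  "Jk m k q = integral {0..1} (\<lambda>t. sqrt t ^ (m-2) * t ^ k / (1 - q*t) ^ (m+k))"

lemma pos_aux: "q \<in> {-1<..<1} \<Longrightarrow> t \<in> {0..1} \<Longrightarrow> 1 - q * t > (0::real)"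
proof -
  assume "q \<in> {-1<..<1}" "t \<in> {0..1}"
  then have "q * t < 1"
  proof (cases "q \<ge> 0")
    case True
    then have "q * t \<le> q * 1" using \<open>t \<in> {0..1}\<close> by (intro mult_left_mono) auto
    then show ?thesis using \<open>q \<in> {-1<..<1}\<close> by simp
  next
    case False
    then have "q * t \<le> 0" using \<open>t \<in> {0..1}\<close> by (intro mult_nonpos_nonneg) auto
    then show ?thesis by simp
  qed
  then show ?thesis by simp
qed

lemma pw_aux: "(y::real) \<noteq> 0 \<Longrightarrow> y ^ M / (y ^ Suc M * y ^ Suc M) = 1 / y ^ Suc (Suc M)"
  by (simp add: field_simps)

lemma pw_aux2: "(y::real) \<noteq> 0 \<Longrightarrow>
   a * (N * (t * y ^ M)) / (y ^ Suc M * y ^ Suc M) = N * (a * t / y ^ Suc (Suc M))"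
proof -
  assume y: "y \<noteq> 0"
  have "a * (N * (t * y ^ M)) / (y ^ Suc M * y ^ Suc M) = (a * N * t) * (y ^ M / (y ^ Suc M * y ^ Suc M))"
    by simp
  also have "\<dots> = N * (a * t / y ^ Suc (Suc M))" using pw_aux[OF y, of M] by simp
  finally show ?thesis .
qed

lemma Jk_deriv:
  assumes q: "q \<in> {-1<..<1}"
  shows "(Jk m k has_real_derivative (real (m+k) * Jk m (Suc k) q)) (at q)"
proof -
  let ?f = "\<lambda>x t. sqrt t ^ (m-2) * t ^ k / (1 - x*t) ^ (m+k)"
  let ?fx = "\<lambda>x t. real (m+k) * (sqrt t ^ (m-2) * t ^ Suc k / (1 - x*t) ^ (m + Suc k))"
  have d: "((\<lambda>x. ?f x t) has_field_derivative ?fx x t) (at x within {-1<..<1})"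
    if "x \<in> {-1<..<1}" "t \<in> cbox 0 1" for x t
  proof -
    have p: "1 - x * t > 0" using pos_aux that by auto
    have "((\<lambda>x. ?f x t) has_field_derivative
       sqrt t ^ (m - 2) * t ^ k * ((real m + real k) * (t * (1 - x * t) ^ (m + k - Suc 0))) / ((1 - x * t) ^ (m + k) * (1 - x * t) ^ (m + k))) (at x within {-1<..<1})"
      using p by (auto intro!: derivative_eq_intros simp del: power_Suc)
    moreover have "sqrt t ^ (m - 2) * t ^ k * ((real m + real k) * (t * (1 - x * t) ^ (m + k - Suc 0))) / ((1 - x * t) ^ (m + k) * (1 - x * t) ^ (m + k))
       = ?fx x t"
    proof (cases "m + k")
      case (Suc M)
      have e: "m + Suc k = Suc (Suc M)" "real m + real k = real (Suc M)" "m + k - Suc 0 = M"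
        using Suc by auto
      have "1 - x * t \<noteq> 0" using p by simp
      from pw_aux2[OF this, of "sqrt t ^ (m - 2) * t ^ k" "real (Suc M)" t M]
      show ?thesis unfolding e Suc by (simp add: mult.assoc)
    qed simp
    ultimately show ?thesis by simp
  qed
  have i: "?f x integrable_on cbox 0 1" if "x \<in> {-1<..<1}" for x
  proof -
    have "\<forall>t\<in>{0..1}. 1 - x*t \<noteq> 0" using pos_aux[OF that] by force
    then show ?thesis
      by (intro integrable_continuous continuous_intros) (auto simp: cbox_interval)
  qed
  have c: "continuous_on ({-1<..<1} \<times> cbox 0 1) (\<lambda>(x, t). ?fx x t)"
  proof -
    have ne: "a * b \<noteq> 1" if "a \<in> {-1<..<1}" "b \<in> {0..1}" for a b :: real
      using pos_aux[OF that] by auto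
    show ?thesis using ne
      by (auto simp: cbox_interval split_beta intro!: continuous_intros)
  qed
  have "((\<lambda>x. integral (cbox 0 1) (?f x)) has_field_derivative integral (cbox 0 1) (?fx q))
      (at q within {-1<..<1})"
    by (rule leibniz_rule_field_derivative[OF d i c q]) auto
  moreover have "at q within {-1<..<1} = at q" using q by (intro at_within_open) auto
  ultimately have "((\<lambda>x. integral {0..1} (?f x)) has_field_derivative integral {0..1} (?fx q)) (at q)"
    by (simp only: cbox_interval)
  moreover have "(\<lambda>x. integral {0..1} (?f x)) = Jk m k" by (rule ext) (simp only: Jk_def)
  moreover have "integral {0..1} (?fx q) = real (m+k) * Jk m (Suc k) q"
    unfolding Jk_def by (rule integral_mult_right)
  ultimately show ?thesis by simp
qed

lemma Jk_smooth: "Cn n {-1<..<1} (Jk m k)"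
proof (induction n arbitrary: k)
  case (Suc n)
  have "Cn n {-1<..<1} (\<lambda>q. real (m+k) * Jk m (Suc k) q)" using Suc.IH Cn_scale by blast
  then show ?case unfolding Cn.simps
    by (intro exI[of _ "\<lambda>q. real (m+k) * Jk m (Suc k) q"]) (use Jk_deriv in blast)
qed simp

lemma G_alg:
  fixes N P Y y q t :: real
  assumes "y \<noteq> 0" "Y \<noteq> 0"
  shows "(N * P * (y * Y) / 2 + P * t * (N * (q * Y))) / ((y * Y) * (y * Y)) =
         N * P / (2 * (y * Y)) + q * (N * (P * t)) / (y * (y * Y))"
  using assms by (simp add: field_simps)

lemma G_deriv:
  fixes q t :: real and n :: nat
  assumes t: "t > 0" and y: "1 - q*t > 0"
  shows "((\<lambda>t. sqrt t ^ Suc (Suc n) / (1 - q*t) ^ Suc (Suc n)) has_real_derivative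
     (real (Suc (Suc n)) / 2) * (sqrt t ^ n / (1 - q*t) ^ Suc (Suc n))
     + q * (real (Suc (Suc n)) * (sqrt t ^ n * t / (1 - q*t) ^ Suc (Suc (Suc n))))) (at t)"
proof -
  have e1: "inverse (sqrt t) * sqrt t ^ Suc n = sqrt t ^ n" using t by simp
  have e2: "sqrt t ^ Suc (Suc n) = sqrt t ^ n * t" using t
    by (simp add: power2_eq_square[symmetric] mult.assoc)
  have e3: "(1 - q*t) ^ Suc (Suc n) = (1 - q*t) * (1 - q*t) ^ Suc n" by simp
  have e4: "(1 - q*t) ^ Suc (Suc (Suc n)) = (1 - q*t) * ((1 - q*t) * (1 - q*t) ^ Suc n)" by simp
  have "(1 - q*t) ^ Suc n \<noteq> 0" using y by simp
  note G = G_alg[OF _ this, of "1 - q*t" "2 + real n" "sqrt t ^ n" t q]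
  show ?thesis using t y
    apply (auto intro!: derivative_eq_intros simp del: power_Suc)
    apply (simp only: e1 e2 e3 e4)
    using G y by simp
qed

lemma J_ibp:
  assumes m: "m \<ge> 2" and q: "q \<in> {-1<..<1}"
  shows "real m / 2 * Jk m 0 q + q * (real m * Jk m 1 q) = 1 / (1-q)^m"
proof -
  obtain n where mn: "m = Suc (Suc n)" using m by (metis add_2_eq_Suc le_Suc_ex)
  have ne: "1 - q*t > 0" if "t \<in> {0..1}" for t using pos_aux[OF q that] .
  let ?G = "\<lambda>t. sqrt t ^ Suc (Suc n) / (1 - q*t) ^ Suc (Suc n)"
  let ?a = "\<lambda>t. sqrt t ^ n / (1 - q*t) ^ Suc (Suc n)"
  let ?b = "\<lambda>t. sqrt t ^ n * t / (1 - q*t) ^ Suc (Suc (Suc n))"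
  let ?h = "\<lambda>t. (real (Suc (Suc n)) / 2) * ?a t + q * (real (Suc (Suc n)) * ?b t)"
  have nz: "\<forall>t\<in>{0..1}. (1 - q*t) \<noteq> 0" using ne by force
  have cG: "continuous_on {0..1} ?G" using nz by (intro continuous_intros) auto
  have "(?h has_integral (?G 1 - ?G 0)) {0..1}"
  proof (rule fundamental_theorem_of_calculus_interior)
    show "continuous_on {0..1} ?G" by (rule cG)
    fix t :: real assume "t \<in> {0<..<1}"
    then have "t > 0" "1 - q*t > 0" using ne by auto
    from G_deriv[OF this, of n] show "(?G has_vector_derivative ?h t) (at t)"
      by (simp add: has_real_derivative_iff_has_vector_derivative)
  qed simp
  then have hi: "integral {0..1} ?h = 1 / (1-q) ^ Suc (Suc n)" by (simp add: integral_unique)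
  have ia: "?a integrable_on {0..1}" using nz by (intro integrable_continuous_real continuous_intros) auto
  have ib: "?b integrable_on {0..1}" using nz by (intro integrable_continuous_real continuous_intros) auto
  have ia2: "(\<lambda>t. (real (Suc (Suc n)) / 2) * ?a t) integrable_on {0..1}"
    using nz by (intro integrable_continuous_real continuous_intros) auto
  have ib2: "(\<lambda>t. q * (real (Suc (Suc n)) * ?b t)) integrable_on {0..1}"
    using nz by (intro integrable_continuous_real continuous_intros) auto
  have "integral {0..1} ?h = integral {0..1} (\<lambda>t. (real (Suc (Suc n)) / 2) * ?a t)
      + integral {0..1} (\<lambda>t. q * (real (Suc (Suc n)) * ?b t))"
    by (rule integral_add[OF ia2 ib2])
  also have "\<dots> = (real (Suc (Suc n)) / 2) * integral {0..1} ?a + q * (real (Suc (Suc n)) * integral {0..1} ?b)"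
    by (simp only: integral_mult_right)
  finally have "integral {0..1} ?h = (real (Suc (Suc n)) / 2) * integral {0..1} ?a + q * (real (Suc (Suc n)) * integral {0..1} ?b)" .
  moreover have "Jk m 0 q = integral {0..1} ?a" "Jk m 1 q = integral {0..1} ?b"
    unfolding Jk_def mn by simp_all
  ultimately show ?thesis using hi mn by simp
qed

lemma Cn_subset: "S \<subseteq> T \<Longrightarrow> Cn n T f \<Longrightarrow> Cn n S f"
proof (induction n arbitrary: f)
  case (Suc n)
  then obtain f' where "\<forall>x\<in>T. (f has_real_derivative f' x) (at x)" "Cn n T f'" by auto
  then show ?case using Suc by auto
qed simp

lemma Cn_cont: "Cn (Suc n) T f \<Longrightarrow> continuous_on T f"
proof -
  assume "Cn (Suc n) T f"
  then obtain f' where d: "\<forall>x\<in>T. (f has_real_derivative f' x) (at x)" by auto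
  show ?thesis
    by (rule continuous_at_imp_continuous_on) (use d DERIV_isCont in blast)
qed

definition Bf :: "nat \<Rightarrow> real \<Rightarrow> real \<Rightarrow> real" where
  "Bf m c q = c * (1-q)^(m-1) * Jk m 0 q"

definition Bd :: "nat \<Rightarrow> real \<Rightarrow> real \<Rightarrow> real" where
  "Bd m c q = c * (- (real (m-1) * (1-q)^(m-2)) * Jk m 0 q + (1-q)^(m-1) * (real m * Jk m 1 q))"

lemma Bf_deriv: "m \<ge> 2 \<Longrightarrow> q \<in> {-1<..<1} \<Longrightarrow> (Bf m c has_real_derivative Bd m c q) (at q)"
  unfolding Bf_def Bd_def
  apply (rule derivative_eq_intros Jk_deriv refl | assumption)+
  apply (cases m; cases "m - 1")
  apply (auto simp: algebra_simps)
  done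

lemma Bf_smooth: "Cn n {-1<..<1} (Bf m c)"
  unfolding Bf_def
  by (intro Cn_mult Cn_const Cn_power Cn_diff Cn_id Jk_smooth)

lemma canc_aux: "(y::real) \<noteq> 0 \<Longrightarrow> P \<noteq> 0 \<Longrightarrow> c * (y*P) * (1/(y*(y*P)) - K) = c/y - K*(c*(y*P))"
  by (simp add: field_simps)

lemma canc_aux2: "(y::real) \<noteq> 0 \<Longrightarrow> A * (c * (y * P) * J) / y = A * (c * P * J)"
  by simp

lemma Bf_ode:
  assumes m: "m \<ge> 2" and q: "q \<in> {-1<..<1}"
  shows "q * Bd m c q = c / (1-q) - real m / 2 * Bf m c q - real (m-1) * q * Bf m c q / (1-q)"
proof -
  obtain n where mn: "m = Suc (Suc n)" using m by (metis add_2_eq_Suc le_Suc_ex)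
  have q1: "1 - q \<noteq> 0" using q by auto
  have I: "q * (real m * Jk m 1 q) = 1 / (1-q)^m - real m / 2 * Jk m 0 q" using J_ibp[OF m q] by simp
  have "q * Bd m c q = c * (- (real (m-1) * q * (1-q)^(m-2)) * Jk m 0 q) + c * (1-q)^(m-1) * (q * (real m * Jk m 1 q))"
    unfolding Bd_def by (simp add: algebra_simps)
  also have "\<dots> = c * (- (real (m-1) * q * (1-q)^(m-2)) * Jk m 0 q) + c * (1-q)^(m-1) * (1 / (1-q)^m - real m / 2 * Jk m 0 q)"
    by (simp only: I)
  also have "\<dots> = c / (1-q) - real m / 2 * Bf m c q - real (m-1) * q * Bf m c q / (1-q)"
  proof -
    have P: "(1-q)^n \<noteq> 0" using q1 by simp
    have e: "m - 1 = Suc n" "m - 2 = n" "real m = real n + 2" "real (Suc n) = real n + 1" using mn by auto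
    have pw: "(1-q)^(Suc n) = (1-q) * (1-q)^n" "(1-q)^m = (1-q)*((1-q)*(1-q)^n)" using mn by auto
    have a1: "c * ((1-q) * (1-q)^n) * (1 / ((1-q)*((1-q)*(1-q)^n)) - (real n + 2) / 2 * Jk m 0 q)
      = c / (1-q) - (real n + 2) / 2 * (c * ((1-q) * (1-q)^n) * Jk m 0 q)"
      using canc_aux[OF q1 P, of c "(real n + 2) / 2 * Jk m 0 q"] by (simp only: ac_simps)
    have a2: "(real n + 1) * q * (c * ((1-q) * (1-q)^n) * Jk m 0 q) / (1-q) = (real n + 1) * q * (c * (1-q)^n * Jk m 0 q)"
      by (rule canc_aux2[OF q1])
    show ?thesis unfolding Bf_def e pw a1 a2 by (simp add: algebra_simps)
  qed
  finally show ?thesis .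
qed

definition psi :: "nat \<Rightarrow> real \<Rightarrow> real \<Rightarrow> real" where
  "psi m c q = Bf m c q / ((1-q) * sqrt (1 + q * (Bf m c q)^2))"

definition Tdom :: "nat \<Rightarrow> real \<Rightarrow> real set" where
  "Tdom m c = {-1<..<1} \<inter> (\<lambda>q. 1 + q * (Bf m c q)^2) -` {0<..}"

lemma Tdom_open: "open (Tdom m c)"
  unfolding Tdom_def
  by (intro continuous_open_preimage continuous_intros Cn_cont[OF Bf_smooth[of "Suc 0"]])

lemma Tdom_sub: "{0..<1} \<subseteq> Tdom m c"
proof
  fix x :: real assume x: "x \<in> {0..<1}"
  then have "x * (Bf m c x)^2 \<ge> 0" by simp
  then have "0 < 1 + x * (Bf m c x)^2" by linarith
  then show "x \<in> Tdom m c" using x unfolding Tdom_def by auto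
qed

lemma Tdom_sub2: "Tdom m c \<subseteq> {-1<..<1}" unfolding Tdom_def by auto

lemma psi_smooth: "Cn n (Tdom m c) (psi m c)"
proof -
  have B: "Cn n (Tdom m c) (Bf m c)" by (rule Cn_subset[OF Tdom_sub2 Bf_smooth])
  have R: "Cn n (Tdom m c) (\<lambda>q. sqrt (1 + q * (Bf m c q)^2))"
  proof (rule Cn_sqrt)
    show "Cn n (Tdom m c) (\<lambda>q. 1 + q * (Bf m c q)^2)"
      by (intro Cn_add Cn_mult Cn_const Cn_id Cn_power B)
  qed (auto simp: Tdom_def)
  show ?thesis unfolding psi_def
    by (rule Cn_divide[OF B Cn_mult[OF Cn_diff[OF Cn_const Cn_id] R]])
      (auto simp: Tdom_def)
qed

definition aleft :: "nat \<Rightarrow> real \<Rightarrow> real" where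
  "aleft m c = (SOME a. a < 0 \<and> {a..<1} \<subseteq> Tdom m c)"

lemma aleft: "aleft m c < 0 \<and> {aleft m c..<1} \<subseteq> Tdom m c"
proof -
  have "0 \<in> Tdom m c" using Tdom_sub[of m c] by auto
  then obtain e where e: "e > 0" "ball 0 e \<subseteq> Tdom m c" using Tdom_open open_contains_ball by blast
  define a where "a = - min e 1 / 2"
  have "a < 0" using e by (simp add: a_def)
  moreover have "{a..<1} \<subseteq> Tdom m c"
  proof
    fix x assume x: "x \<in> {a..<1}"
    show "x \<in> Tdom m c"
    proof (cases "x \<ge> 0")
      case True then have "x \<in> {0..<1}" using x by auto
      then show ?thesis using Tdom_sub[of m c] by blast
    next
      case False
      then have "x \<in> ball 0 e" using x e by (auto simp: a_def dist_real_def)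
      then show ?thesis using e by auto
    qed
  qed
  ultimately show ?thesis unfolding aleft_def by (rule someI[where P="\<lambda>a. a < 0 \<and> {a..<1} \<subseteq> Tdom m c", OF conjI])
qed

definition Ddom :: "nat \<Rightarrow> real \<Rightarrow> real set" where
  "Ddom m c = {aleft m c<..<1}"

definition phi0 :: "nat \<Rightarrow> real \<Rightarrow> real \<Rightarrow> real" where
  "phi0 m c q = integral {aleft m c..q} (psi m c)"

lemma Ddom_sub: "Ddom m c \<subseteq> Tdom m c"
proof
  fix x assume "x \<in> Ddom m c"
  then have "x \<in> {aleft m c..<1}" by (auto simp: Ddom_def)
  then show "x \<in> Tdom m c" using aleft[of m c] by blast
qed

lemma phi0_deriv: "q \<in> Ddom m c \<Longrightarrow> (phi0 m c has_real_derivative psi m c q) (at q)"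
proof -
  assume q: "q \<in> Ddom m c"
  define b where "b = (q + 1) / 2"
  have "{aleft m c..b} \<subseteq> {aleft m c..<1}" using q by (auto simp: b_def Ddom_def)
  then have sub: "{aleft m c..b} \<subseteq> Tdom m c" using aleft[of m c] by blast
  have "continuous_on (Tdom m c) (psi m c)" by (rule Cn_cont[OF psi_smooth])
  then have c: "continuous_on {aleft m c..b} (psi m c)" using sub continuous_on_subset by blast
  have qi: "q \<in> {aleft m c..b}" using q by (auto simp: b_def Ddom_def)
  have "(phi0 m c has_real_derivative psi m c q) (at q within {aleft m c..b})"
    unfolding phi0_def by (rule integral_has_real_derivative[OF c qi])
  moreover have "at q within {aleft m c..b} = at q"
    using q by (intro at_within_interior) (auto simp: b_def Ddom_def)
  ultimately show ?thesis by simp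
qed

lemma phi0_smooth: "smooth1 (Ddom m c) (phi0 m c)"
  unfolding smooth1_def
proof
  fix n
  show "Cn n (Ddom m c) (phi0 m c)"
  proof (cases n)
    case (Suc k)
    have "Cn k (Ddom m c) (psi m c)" by (rule Cn_subset[OF Ddom_sub psi_smooth])
    then show ?thesis using Suc phi0_deriv by auto
  qed simp
qed

lemma Ddom_props: "open (Ddom m c)" "{0..<1} \<subseteq> Ddom m c" "Ddom m c \<subseteq> {-1<..<1}"
  using aleft[of m c] Tdom_sub2[of m c] Ddom_sub[of m c] by (auto simp: Ddom_def)

lemma tanh_sq_lt: "tanh (x::real) ^ 2 < 1"
proof -
  have "\<bar>tanh x\<bar> < 1" using tanh_real_lt_1[of x] tanh_real_gt_neg1[of x] by auto
  then have "\<bar>tanh x\<bar> ^ 2 < 1 ^ 2" by (intro power_strict_mono) auto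
  then show ?thesis by simp
qed

lemma tanh_sq_in: "tanh (x::real) ^ 2 \<in> {-1<..<1}"
  using tanh_sq_lt[of x] by (auto intro: less_le_trans[of _ 0])

lemma one_minus_tanh_sq: "1 - tanh (u::real) ^ 2 = 1 / cosh u ^ 2"
proof -
  have "cosh u \<noteq> 0" using cosh_real_pos[of u] by linarith
  have "1 - tanh u ^ 2 = (cosh u ^ 2 - sinh u ^ 2) / cosh u ^ 2"
    using \<open>cosh u \<noteq> 0\<close> by (simp add: tanh_def power_divide field_simps)
  also have "cosh u ^ 2 - sinh u ^ 2 = 1" using cosh_square_eq[of u] by simp
  finally show ?thesis .
qed

lemma sinh_tanh: "sinh (s::real) = 2 * tanh (s/2) / (1 - tanh (s/2) ^ 2)"
proof -
  define u where "u = s / 2"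
  have s: "s = 2 * u" by (simp add: u_def)
  have "cosh u \<noteq> 0" using cosh_real_pos[of u] by linarith
  then show ?thesis unfolding s one_minus_tanh_sq sinh_double
    by (simp add: tanh_def field_simps power2_eq_square)
qed

lemma G_alg2:
  fixes T J0 J1 :: real and k :: nat
  assumes I: "real (Suc k) / 2 * J0 + T^2 * (real (Suc k) * J1) = 1 / (1 - T^2) ^ Suc k"
    and T: "T^2 < 1"
  shows "2^k * (real (Suc k) * T^k * ((1 - T^2)/2) * J0 + T^(Suc k) * (real (Suc k) * J1 * (2 * T * ((1 - T^2)/2))))
     = (2 * T / (1 - T^2)) ^ k"
proof -
  have nz: "1 - T^2 \<noteq> 0" using T by simp
  have "2^k * (real (Suc k) * T^k * ((1 - T^2)/2) * J0 + T^(Suc k) * (real (Suc k) * J1 * (2 * T * ((1 - T^2)/2))))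
      = 2^k * T^k * (1 - T^2) * (real (Suc k) / 2 * J0 + T^2 * (real (Suc k) * J1))"
    by (simp add: field_simps power2_eq_square)
  also have "\<dots> = 2^k * T^k * (1 - T^2) / (1 - T^2) ^ Suc k" by (simp only: I) simp
  also have "\<dots> = 2^k * T^k / (1 - T^2) ^ k" using nz by (simp add: field_simps)
  also have "\<dots> = (2 * T / (1 - T^2)) ^ k" by (simp add: power_divide power_mult_distrib)
  finally show ?thesis .
qed

lemma G_der:
  assumes m: "m \<ge> 2"
  shows "((\<lambda>s. 2^(m-1) * tanh (s/2) ^ m * Jk m 0 (tanh (s/2) ^ 2)) has_real_derivative sinh s ^ (m-1)) (at s)"
proof -
  obtain k where mk: "m = Suc k" using m by (cases m) auto
  let ?T = "tanh (s/2)"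
  have dT: "((\<lambda>s. tanh (s/2)) has_real_derivative (1 - ?T^2) / 2) (at s)"
    by (auto intro!: derivative_eq_intros)
  have dQ: "((\<lambda>s. tanh (s/2) ^ 2) has_real_derivative 2 * ?T * ((1 - ?T^2) / 2)) (at s)"
    using DERIV_chain2[OF DERIV_pow[of 2 ?T] dT] by simp
  have dJ: "((\<lambda>s. Jk m 0 (tanh (s/2) ^ 2)) has_real_derivative (real m * Jk m 1 (?T^2)) * (2 * ?T * ((1 - ?T^2) / 2))) (at s)"
    using DERIV_chain2[OF Jk_deriv[OF tanh_sq_in[of "s/2"], of m 0] dQ] by simp
  have dTm: "((\<lambda>s. tanh (s/2) ^ m) has_real_derivative real m * ?T ^ (m - 1) * ((1 - ?T^2) / 2)) (at s)"
    using DERIV_chain2[OF DERIV_pow[of m ?T] dT] by simp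
  have "((\<lambda>s. 2^(m-1) * tanh (s/2) ^ m * Jk m 0 (tanh (s/2) ^ 2)) has_real_derivative
      2^(m-1) * (real m * ?T ^ (m - 1) * ((1 - ?T^2) / 2) * Jk m 0 (?T^2) + ?T ^ m * ((real m * Jk m 1 (?T^2)) * (2 * ?T * ((1 - ?T^2) / 2))))) (at s)"
    using DERIV_cmult[OF DERIV_mult[OF dTm dJ], of "2^(m-1)"] by (simp add: ac_simps)
  moreover have "2^(m-1) * (real m * ?T ^ (m - 1) * ((1 - ?T^2) / 2) * Jk m 0 (?T^2) + ?T ^ m * ((real m * Jk m 1 (?T^2)) * (2 * ?T * ((1 - ?T^2) / 2))))
      = sinh s ^ (m-1)"
  proof -
    have I: "real (Suc k) / 2 * Jk m 0 (?T^2) + ?T^2 * (real (Suc k) * Jk m 1 (?T^2)) = 1 / (1 - ?T^2) ^ Suc k"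
      using J_ibp[OF m tanh_sq_in[of "s/2"]] mk by simp
    show ?thesis using G_alg2[OF I tanh_sq_lt] mk sinh_tanh[of s] by (simp add: mult.assoc)
  qed
  ultimately show ?thesis by simp
qed

lemma I_formula:
  assumes m: "m \<ge> 2" and s: "s \<ge> 0"
  shows "integral {0..s} (\<lambda>t. sinh t ^ (m-1)) = 2^(m-1) * tanh (s/2) ^ m * Jk m 0 (tanh (s/2) ^ 2)"
proof -
  have "((\<lambda>t. sinh t ^ (m-1)) has_integral
      (2^(m-1) * tanh (s/2) ^ m * Jk m 0 (tanh (s/2) ^ 2) - 2^(m-1) * tanh (0/2) ^ m * Jk m 0 (tanh (0/2) ^ 2))) {0..s}"
  proof (rule fundamental_theorem_of_calculus[OF s, of "\<lambda>s. 2^(m-1) * tanh (s/2) ^ m * Jk m 0 (tanh (s/2) ^ 2)" "\<lambda>t. sinh t ^ (m-1)"])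
    fix x assume "x \<in> {0..s}"
    show "((\<lambda>s. 2^(m-1) * tanh (s/2) ^ m * Jk m 0 (tanh (s/2) ^ 2)) has_vector_derivative sinh x ^ (m-1)) (at x within {0..s})"
      using has_field_derivative_at_within[OF G_der[OF m, of x]]
      unfolding has_real_derivative_iff_has_vector_derivative .
  qed
  then show ?thesis using m by (simp add: integral_unique)
qed

lemma A_tanh:
  assumes m: "m \<ge> 2" and s: "s \<ge> 0"
  shows "A_fun m c s = tanh (s/2) * Bf m c (tanh (s/2) ^ 2)"
proof (cases "s = 0")
  case True
  then show ?thesis using m by (simp add: A_fun_def)
next
  case False
  then have sp: "s > 0" using s by simp
  obtain k where mk: "m = Suc k" using m by (cases m) auto
  define T where "T = tanh (s/2)"
  have T0: "T > 0" using sp by (simp add: T_def)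
  have T1: "T^2 < 1" using tanh_sq_lt by (simp add: T_def)
  have nz: "1 - T^2 \<noteq> 0" using T1 by simp
  have "A_fun m c s = c / (2 * T / (1 - T^2)) ^ k * (2^k * T ^ Suc k * Jk m 0 (T^2))"
    unfolding A_fun_def I_formula[OF m s] using sinh_tanh[of s] mk by (simp add: T_def)
  also have "\<dots> = T * (c * (1 - T^2) ^ k * Jk m 0 (T^2))"
    using T0 nz by (simp add: power_divide power_mult_distrib field_simps)
  finally show ?thesis unfolding Bf_def T_def mk by simp
qed

lemma integrand_eq:
  assumes m: "m \<ge> 2" and s: "s \<ge> 0"
  shows "A_fun m c s / sqrt (1 + (A_fun m c s)^2) = psi m c (tanh (s/2) ^ 2) * (tanh (s/2) * (1 - tanh (s/2) ^ 2))"
proof -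
  define T where "T = tanh (s/2)"
  define B where "B = Bf m c (T^2)"
  have T1: "T^2 < 1" using tanh_sq_lt by (simp add: T_def)
  have nz: "1 - T^2 \<noteq> 0" using T1 by simp
  have R: "sqrt (1 + T^2 * B^2) > 0"
    by (simp add: add_pos_nonneg)
  have "A_fun m c s = T * B" unfolding A_tanh[OF m s] T_def B_def ..
  then have "A_fun m c s / sqrt (1 + (A_fun m c s)^2) = T * B / sqrt (1 + T^2 * B^2)"
    by (simp add: power_mult_distrib)
  also have "\<dots> = B / ((1 - T^2) * sqrt (1 + T^2 * B^2)) * (T * (1 - T^2))"
    using nz R by (simp add: field_simps)
  finally show ?thesis unfolding psi_def B_def T_def .
qed

lemma phi_tanh_deriv:
  "((\<lambda>s. phi0 m c (tanh (s/2) ^ 2)) has_real_derivative psi m c (tanh (s/2) ^ 2) * (tanh (s/2) * (1 - tanh (s/2) ^ 2))) (at s)"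
proof -
  let ?T = "tanh (s/2)"
  have dT: "((\<lambda>s. tanh (s/2)) has_real_derivative (1 - ?T^2) / 2) (at s)"
    by (auto intro!: derivative_eq_intros)
  have dQ: "((\<lambda>s. tanh (s/2) ^ 2) has_real_derivative (?T * (1 - ?T^2))) (at s)"
    using DERIV_chain2[OF DERIV_pow[of 2 ?T] dT] by simp
  have "?T^2 \<in> {0..<1}" using tanh_sq_lt[of "s/2"] by simp
  then have "?T^2 \<in> Ddom m c" using Ddom_props(2) by blast
  from DERIV_chain2[OF phi0_deriv[OF this] dQ] show ?thesis .
qed

lemma tanh_hyp: "0 \<le> (r::real) \<Longrightarrow> r < 1 \<Longrightarrow> tanh (ln ((1 + r) / (1 - r)) / 2) = r"
proof -
  assume r: "0 \<le> r" "r < 1"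
  define y where "y = (1 + r) / (1 - r)"
  have y: "y > 0" using r unfolding y_def by (intro divide_pos_pos) auto
  have "exp (- 2 * (ln y / 2)) = 1 / y" using y by (simp add: exp_minus exp_ln inverse_eq_divide)
  then have "tanh (ln y / 2) = (1 - 1/y) / (1 + 1/y)" by (simp add: tanh_real_altdef)
  also have "\<dots> = ((y - 1) / y) / ((y + 1) / y)" using y by (simp add: diff_divide_distrib add_divide_distrib)
  also have "\<dots> = (y - 1) / (y + 1)" using y by simp
  also have "\<dots> = r" using r by (simp add: y_def field_simps)
  finally show ?thesis by (simp add: y_def)
qed

lemma f_fun_phi:
  fixes x :: "real^'m"
  assumes m: "CARD('m) \<ge> 2" and x: "x \<in> ball_model"
  shows "f_fun c x = phi0 CARD('m) c (norm x ^ 2) - phi0 CARD('m) c 0"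
proof -
  let ?m = "CARD('m)"
  define r where "r = hyp_dist0 x"
  have nx: "norm x < 1" using x by (simp add: ball_model_def)
  have r0: "r \<ge> 0" using nx by (simp add: r_def hyp_dist0_def)
  have tr: "tanh (r/2) = norm x" using tanh_hyp[of "norm x"] nx by (simp add: r_def hyp_dist0_def)
  have "((\<lambda>s. A_fun ?m c s / sqrt (1 + (A_fun ?m c s)^2)) has_integral
      (phi0 ?m c (tanh (r/2) ^ 2) - phi0 ?m c (tanh (0/2) ^ 2))) {0..r}"
  proof (rule fundamental_theorem_of_calculus[OF r0, of "\<lambda>s. phi0 ?m c (tanh (s/2) ^ 2)"])
    fix s assume s: "s \<in> {0..r}"
    show "((\<lambda>s. phi0 ?m c (tanh (s/2) ^ 2)) has_vector_derivative A_fun ?m c s / sqrt (1 + (A_fun ?m c s)^2)) (at s within {0..r})"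
      using has_field_derivative_at_within[OF phi_tanh_deriv[of ?m c s]] integrand_eq[OF m, of s c] s
      unfolding has_real_derivative_iff_has_vector_derivative by simp
  qed
  then show ?thesis unfolding f_fun_def r_def[symmetric] tr by (simp add: integral_unique)
qed

inductive_set Sm :: "(real^'m \<Rightarrow> real) set" where
  Sm_const: "(\<lambda>x. a) \<in> Sm"
| Sm_comp: "(\<lambda>x. x $ i) \<in> Sm"
| Sm_rad: "smooth1 D g \<Longrightarrow> open D \<Longrightarrow> {0..<1} \<subseteq> D \<Longrightarrow> (\<lambda>x. g (x \<bullet> x)) \<in> Sm"
| Sm_add: "f \<in> Sm \<Longrightarrow> g \<in> Sm \<Longrightarrow> (\<lambda>x. f x + g x) \<in> Sm"
| Sm_mult: "f \<in> Sm \<Longrightarrow> g \<in> Sm \<Longrightarrow> (\<lambda>x. f x * g x) \<in> Sm"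

lemma Sm_sum: "finite I \<Longrightarrow> (\<And>i. i \<in> I \<Longrightarrow> f i \<in> Sm) \<Longrightarrow> (\<lambda>x. \<Sum>i\<in>I. f i x) \<in> Sm"
proof (induction I rule: finite_induct)
  case empty then show ?case using Sm_const[of 0] by simp
next
  case (insert j I)
  then have "(\<lambda>x. f j x + (\<Sum>i\<in>I. f i x)) \<in> Sm" by (intro Sm_add) auto
  then show ?case using insert by simp
qed

lemma Sm_inner: "(\<lambda>x::real^'m. x \<bullet> v) \<in> Sm"
proof -
  have "(\<lambda>x::real^'m. \<Sum>i\<in>UNIV. (\<lambda>i x. x $ i * v $ i) i x) \<in> Sm"
    by (intro Sm_sum Sm_mult Sm_comp Sm_const) auto
  then show ?thesis by (simp add: inner_vec_def)
qed

lemma smooth1_deriv: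
  assumes "smooth1 D g" "open D"
  shows "smooth1 D (deriv g) \<and> (\<forall>x\<in>D. (g has_real_derivative deriv g x) (at x))"
proof -
  have d: "\<forall>x\<in>D. (g has_real_derivative deriv g x) (at x)"
  proof
    fix x assume x: "x \<in> D"
    have "Cn (Suc 0) D g" using assms unfolding smooth1_def by blast
    then obtain g' where "\<forall>x\<in>D. (g has_real_derivative g' x) (at x)" by auto
    then show "(g has_real_derivative deriv g x) (at x)" using x DERIV_imp_deriv by fastforce
  qed
  have "Cn n D (deriv g)" for n
  proof -
    have "Cn (Suc n) D g" using assms unfolding smooth1_def by blast
    then obtain g' where g': "\<forall>x\<in>D. (g has_real_derivative g' x) (at x)" "Cn n D g'" by auto
    show ?thesis by (rule Cn_transform[OF assms(2) g'(2)]) (use g' DERIV_imp_deriv in fastforce)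
  qed
  then show ?thesis using d unfolding smooth1_def by blast
qed

lemma Sm_deriv:
  "h \<in> Sm \<Longrightarrow> \<exists>H. (\<forall>x\<in>ball (0::real^'m) 1. (h has_derivative H x) (at x)) \<and> (\<forall>v. (\<lambda>x. H x v) \<in> Sm)"
proof (induction rule: Sm.induct)
  case (Sm_const a)
  show ?case by (rule exI[of _ "\<lambda>x v. 0"]) (auto intro: Sm.Sm_const)
next
  case (Sm_comp i)
  have "((\<lambda>x::real^'m. x $ i) has_derivative (\<lambda>v. v $ i)) (at x)" for x
    by (rule bounded_linear_imp_has_derivative) (rule bounded_linear_vec_nth)
  then show ?case by (intro exI[of _ "\<lambda>x v. v $ i"]) (auto intro: Sm.Sm_const)
next
  case (Sm_rad D g)
  note g' = smooth1_deriv[OF Sm_rad(1,2)]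
  let ?H = "\<lambda>(x::real^'m) v. deriv g (x \<bullet> x) * (x \<bullet> v + v \<bullet> x)"
  have "((\<lambda>x. g (x \<bullet> x)) has_derivative ?H x) (at x)" if x: "x \<in> ball (0::real^'m) 1" for x
  proof -
    have "x \<bullet> x \<in> {0..<1}" using x by (simp add: power2_norm_eq_inner[symmetric] abs_square_less_1)
    then have "x \<bullet> x \<in> D" using Sm_rad(3) by blast
    then have gd: "(g has_real_derivative deriv g (x \<bullet> x)) (at (x \<bullet> x))" using g' by blast
    have "((\<lambda>x. x \<bullet> x) has_derivative (\<lambda>v. x \<bullet> v + v \<bullet> x)) (at x)"
      by (auto intro!: derivative_eq_intros)
    from has_derivative_compose[OF this gd[unfolded has_field_derivative_def]]
    show ?thesis by (simp add: ac_simps)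
  qed
  moreover have "(\<lambda>x. ?H x v) \<in> Sm" for v :: "real^'m"
  proof -
    have "(\<lambda>x. deriv g (x \<bullet> x)) \<in> Sm" using g' Sm_rad by (intro Sm.Sm_rad[of D]) auto
    moreover have "(\<lambda>x::real^'m. x \<bullet> v + v \<bullet> x) \<in> Sm"
      using Sm_add[OF Sm_inner[of v] Sm_inner[of v]] by (simp add: inner_commute)
    ultimately show ?thesis by (rule Sm_mult)
  qed
  ultimately show ?case by (intro exI[of _ ?H]) auto
next
  case (Sm_add f g)
  then obtain F G where F: "\<forall>x\<in>ball 0 1. (f has_derivative F x) (at x)" "\<forall>v. (\<lambda>x. F x v) \<in> Sm"
    and G: "\<forall>x\<in>ball 0 1. (g has_derivative G x) (at x)" "\<forall>v. (\<lambda>x. G x v) \<in> Sm" by blast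
  show ?case
    by (rule exI[of _ "\<lambda>x v. F x v + G x v"]) (use F G in \<open>auto intro!: derivative_eq_intros Sm.Sm_add\<close>)
next
  case (Sm_mult f g)
  then obtain F G where F: "\<forall>x\<in>ball 0 1. (f has_derivative F x) (at x)" "\<forall>v. (\<lambda>x. F x v) \<in> Sm"
    and G: "\<forall>x\<in>ball 0 1. (g has_derivative G x) (at x)" "\<forall>v. (\<lambda>x. G x v) \<in> Sm" by blast
  show ?case
    by (rule exI[of _ "\<lambda>x v. f x * G x v + F x v * g x"])
       (use F G Sm_mult in \<open>auto intro!: derivative_eq_intros Sm.Sm_add Sm.Sm_mult\<close>)
qed

lemma ddir_Sm:
  fixes f :: "real^'m \<Rightarrow> real"
  assumes h: "h \<in> Sm" and eq: "\<And>x. x \<in> ball 0 1 \<Longrightarrow> f x = h x"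
  shows "\<exists>h\<in>Sm. \<forall>x\<in>ball 0 1. ddir f vs x = h x"
proof (induction vs)
  case Nil then show ?case using h eq by auto
next
  case (Cons v vs)
  then obtain k where k: "k \<in> Sm" "\<forall>x\<in>ball 0 1. ddir f vs x = k x" by blast
  obtain H where H: "\<forall>x\<in>ball (0::real^'m) 1. (k has_derivative H x) (at x)" "\<forall>v. (\<lambda>x. H x v) \<in> Sm"
    using Sm_deriv[OF k(1)] by blast
  have dd: "ddir f (v # vs) x = H x v" if x: "x \<in> ball 0 1" for x
  proof -
    have "(ddir f vs has_derivative H x) (at x)"
      by (rule has_derivative_transform_within_open[OF _ open_ball x]) (use H k x in auto)
    then show ?thesis by (simp add: frechet_derivative_at[symmetric])
  qed
  have hv: "(\<lambda>x. H x v) \<in> Sm" using H by blast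
  show ?case by (rule bexI[OF _ hv]) (use dd in simp)
qed

lemma smooth_Sm:
  fixes f :: "real^'m \<Rightarrow> real"
  assumes h: "h \<in> Sm" and eq: "\<And>x. x \<in> ball 0 1 \<Longrightarrow> f x = h x"
  shows "smooth_on (ball 0 1) f"
  unfolding smooth_on_def
proof
  fix vs
  obtain k where k: "k \<in> Sm" "\<forall>x\<in>ball 0 1. ddir f vs x = k x" using ddir_Sm[OF h eq] by blast
  obtain H where H: "\<forall>x\<in>ball (0::real^'m) 1. (k has_derivative H x) (at x)"
    using Sm_deriv[OF k(1)] by blast
  show "ddir f vs differentiable_on ball 0 1"
    unfolding differentiable_on_def
  proof
    fix x assume x: "x \<in> ball (0::real^'m) 1"
    have "(ddir f vs has_derivative H x) (at x)"
      by (rule has_derivative_transform_within_open[OF _ open_ball x]) (use H k x in auto)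
    then show "ddir f vs differentiable at x within ball 0 1"
      unfolding differentiable_def using has_derivative_at_withinI by blast
  qed
qed

lemma f_fun_smooth:
  assumes m: "CARD('m) \<ge> 2"
  shows "smooth_on (ball_model :: (real^'m) set) (f_fun c)"
proof -
  let ?h = "\<lambda>x::real^'m. phi0 CARD('m) c (x \<bullet> x) + (- phi0 CARD('m) c 0)"
  have "?h \<in> Sm"
    by (intro Sm_add Sm_const Sm_rad[of "Ddom CARD('m) c"] phi0_smooth Ddom_props)
  moreover have "f_fun c x = ?h x" if "x \<in> ball 0 1" for x :: "real^'m"
    using f_fun_phi[OF m, of x c] that by (simp add: ball_model_def power2_norm_eq_inner)
  ultimately show ?thesis unfolding ball_model_def by (rule smooth_Sm)
qed

locale geo =
  fixes f :: "real^'m \<Rightarrow> real" and \<phi> P :: "real \<Rightarrow> real" and K :: real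
  assumes feq: "\<And>y. y \<in> ball 0 1 \<Longrightarrow> f y = \<phi> (y \<bullet> y) + K"
    and phid: "\<And>y::real^'m. y \<in> ball 0 1 \<Longrightarrow> (\<phi> has_real_derivative P (y \<bullet> y)) (at (y \<bullet> y))"
begin

lemma f_deriv: "(y::real^'m) \<in> ball 0 1 \<Longrightarrow> (f has_derivative (\<lambda>v. P (y \<bullet> y) * (2 * (y \<bullet> v)))) (at y)"
proof -
  assume y: "y \<in> ball 0 1"
  have "((\<lambda>y. \<phi> (y \<bullet> y) + K) has_derivative (\<lambda>v. P (y \<bullet> y) * (2 * (y \<bullet> v)))) (at y)"
  proof -
    have "((\<lambda>y. y \<bullet> y) has_derivative (\<lambda>v. y \<bullet> v + v \<bullet> y)) (at y)"
      by (auto intro!: derivative_eq_intros)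
    from has_derivative_compose[OF this phid[OF y, unfolded has_field_derivative_def]]
    have "((\<lambda>y. \<phi> (y \<bullet> y)) has_derivative (\<lambda>v. P (y \<bullet> y) * (2 * (y \<bullet> v)))) (at y)"
      by (simp add: inner_commute ac_simps)
    then show ?thesis by (auto intro!: derivative_eq_intros)
  qed
  then show ?thesis
    by (rule has_derivative_transform_within_open[OF _ open_ball y]) (use feq in auto)
qed

lemma F_deriv: "y \<in> ball 0 1 \<Longrightarrow> (graph_map f has_derivative (\<lambda>v. (v, P (y \<bullet> y) * (2 * (y \<bullet> v))))) (at y)"
proof -
  assume y: "y \<in> ball 0 1"
  have e: "graph_map f = (\<lambda>y. (y, f y))" by (rule ext) (simp add: graph_map_def)
  show ?thesis unfolding e by (rule has_derivative_Pair[OF has_derivative_ident f_deriv[OF y]])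
qed

lemma F_fd: "y \<in> ball 0 1 \<Longrightarrow> frechet_derivative (graph_map f) (at y) = (\<lambda>v. (v, P (y \<bullet> y) * (2 * (y \<bullet> v))))"
  by (rule frechet_derivative_at[OF F_deriv, symmetric])

lemma f_fd: "y \<in> ball 0 1 \<Longrightarrow> frechet_derivative f (at y) = (\<lambda>v. P (y \<bullet> y) * (2 * (y \<bullet> v)))"
  by (rule frechet_derivative_at[OF f_deriv, symmetric])

lemma F_fd2:
  assumes x: "x \<in> ball 0 1" and Pd: "(P has_real_derivative Pd) (at (x \<bullet> x))"
  shows "frechet_derivative (\<lambda>y. frechet_derivative (graph_map f) (at y) v) (at x) u
     = (0, 2 * (Pd * (2 * (x \<bullet> u)) * (x \<bullet> v) + P (x \<bullet> x) * (u \<bullet> v)))"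
proof -
  have d1: "((\<lambda>y. P (y \<bullet> y)) has_derivative (\<lambda>u. Pd * (2 * (x \<bullet> u)))) (at x)"
  proof -
    have "((\<lambda>y. y \<bullet> y) has_derivative (\<lambda>u. x \<bullet> u + u \<bullet> x)) (at x)"
      by (auto intro!: derivative_eq_intros)
    from has_derivative_compose[OF this Pd[unfolded has_field_derivative_def]]
    show ?thesis by (simp add: inner_commute ac_simps)
  qed
  have "((\<lambda>y. (v, P (y \<bullet> y) * (2 * (y \<bullet> v)))) has_derivative
     (\<lambda>u. (0, Pd * (2 * (x \<bullet> u)) * (2 * (x \<bullet> v)) + P (x \<bullet> x) * (2 * (u \<bullet> v))))) (at x)"
    by (auto intro!: derivative_eq_intros d1)
  then have "((\<lambda>y. frechet_derivative (graph_map f) (at y) v) has_derivative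
     (\<lambda>u. (0, Pd * (2 * (x \<bullet> u)) * (2 * (x \<bullet> v)) + P (x \<bullet> x) * (2 * (u \<bullet> v))))) (at x)"
    by (rule has_derivative_transform_within_open[OF _ open_ball x]) (simp add: F_fd)
  then show ?thesis by (simp add: frechet_derivative_at[symmetric] algebra_simps)
qed

end

lemma lor_metric_alt: "lor_metric p u v = 4 * (fst u \<bullet> fst v) / (1 - fst p \<bullet> fst p)^2 - snd u * snd v"
  by (simp add: lor_metric_def hyp_metric_def power2_norm_eq_inner)

lemma alg_h: "(y::real) \<noteq> 0 \<Longrightarrow> - (4 * k * (- (2 * y))) / ((y^2)^2) = 8 * k / y^3"
  by (simp add: field_simps power2_eq_square power3_eq_cube)

lemma lor_deriv:
  fixes p :: "(real^'m) \<times> real"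
  assumes nz: "1 - fst p \<bullet> fst p \<noteq> 0"
  shows "((\<lambda>q. lor_metric q V W) has_derivative
     (\<lambda>U. 16 * (fst V \<bullet> fst W) * (fst p \<bullet> fst U) / (1 - fst p \<bullet> fst p)^3)) (at p)"
proof -
  let ?k = "fst V \<bullet> fst W"
  have e: "(\<lambda>q. lor_metric q V W) = (\<lambda>q. 4 * ?k / (1 - fst q \<bullet> fst q)^2 - snd V * snd W)"
    by (rule ext) (simp add: lor_metric_alt)
  let ?s = "fst p \<bullet> fst p"
  have g: "((\<lambda>q::(real^'m) \<times> real. fst q \<bullet> fst q) has_derivative (\<lambda>U. fst p \<bullet> fst U + fst U \<bullet> fst p)) (at p)"
    by (auto intro!: derivative_eq_intros)
  have h: "((\<lambda>t. 4 * ?k / (1 - t)^2 - snd V * snd W) has_real_derivative 8 * ?k / (1 - ?s)^3) (at ?s)"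
  proof -
    have "((\<lambda>t. 4 * ?k / (1 - t)^2 - snd V * snd W) has_real_derivative
        - (4 * ?k * (- (2 * (1 - ?s)))) / ((1 - ?s)^2)^2) (at ?s)"
      using nz by (auto intro!: derivative_eq_intros)
    moreover have "- (4 * ?k * (- (2 * (1 - ?s)))) / ((1 - ?s)^2)^2 = 8 * ?k / (1 - ?s)^3"
      using alg_h[OF nz] .
    ultimately show ?thesis by simp
  qed
  from has_derivative_compose[OF g h[unfolded has_field_derivative_def]]
  show ?thesis unfolding e by (simp add: inner_commute field_simps)
qed

lemma lor_fd:
  fixes p :: "(real^'m) \<times> real"
  assumes nz: "1 - fst p \<bullet> fst p \<noteq> 0"
  shows "frechet_derivative (\<lambda>q. lor_metric q V W) (at p) U = 16 * (fst V \<bullet> fst W) * (fst p \<bullet> fst U) / (1 - fst p \<bullet> fst p)^3"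
  using fun_cong[OF frechet_derivative_at[OF lor_deriv[OF nz, of V W]], of U] by (rule sym)

lemma lor_diff: "lor_metric p z w - lor_metric p z' w = lor_metric p (z - z') w"
  unfolding lor_metric_alt by (simp add: inner_diff_left diff_divide_distrib algebra_simps)

lemma alg_chr: "(y::real) \<noteq> 0 \<Longrightarrow> 4 * ((2 / y) * (a + b - c)) / y^2 = (16 * a / y^3 + 16 * b / y^3 - 16 * c / y^3) / 2"
  by (simp add: field_simps power2_eq_square power3_eq_cube)

lemma christoffel_lor:
  fixes p U V :: "(real^'m) \<times> real"
  assumes nz: "1 - fst p \<bullet> fst p > 0"
  shows "christoffel lor_metric p U V = ((2 / (1 - fst p \<bullet> fst p)) *\<^sub>R ((fst p \<bullet> fst U) *\<^sub>R fst V + (fst p \<bullet> fst V) *\<^sub>R fst U - (fst U \<bullet> fst V) *\<^sub>R fst p), 0)"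
    (is "_ = ?z")
proof -
  let ?s = "fst p \<bullet> fst p"
  have nz': "1 - ?s \<noteq> 0" using nz by simp
  let ?R = "\<lambda>w. (frechet_derivative (\<lambda>q. lor_metric q V w) (at p) U
     + frechet_derivative (\<lambda>q. lor_metric q U w) (at p) V
     - frechet_derivative (\<lambda>q. lor_metric q U V) (at p) w) / 2"
  have R: "?R w = (16 * ((fst p \<bullet> fst U) * (fst V \<bullet> fst w)) / (1 - ?s)^3 + 16 * ((fst p \<bullet> fst V) * (fst U \<bullet> fst w)) / (1 - ?s)^3
       - 16 * ((fst U \<bullet> fst V) * (fst p \<bullet> fst w)) / (1 - ?s)^3) / 2" for w
    unfolding lor_fd[OF nz'] by (simp add: ac_simps)
  have zsat: "lor_metric p ?z w = ?R w" for w
  proof -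
    have "lor_metric p ?z w = 4 * ((2 / (1 - ?s)) * ((fst p \<bullet> fst U) * (fst V \<bullet> fst w) + (fst p \<bullet> fst V) * (fst U \<bullet> fst w)
       - (fst U \<bullet> fst V) * (fst p \<bullet> fst w))) / (1 - ?s)^2"
      unfolding lor_metric_alt by (simp add: inner_add_left inner_diff_left)
    also have "\<dots> = ?R w" unfolding R by (rule alg_chr[OF nz'])
    finally show ?thesis .
  qed
  have uniq: "z' = ?z" if h: "\<forall>w. lor_metric p z' w = ?R w" for z'
  proof -
    define a where "a = fst (z' - ?z)"
    define b where "b = snd (z' - ?z)"
    have "lor_metric p z' w - lor_metric p ?z w = 0" for w
    proof -
      have "lor_metric p z' w = ?R w" using h by blast
      then have "lor_metric p z' w = lor_metric p ?z w" using zsat[of w] by (rule trans[OF _ sym])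
      then show ?thesis by simp
    qed
    then have e: "4 * (a \<bullet> fst w) / (1 - ?s)^2 - b * snd w = 0" for w
      using lor_diff[of p z' w ?z] unfolding lor_metric_alt[of p "z' - ?z"] a_def b_def by simp
    from e[of "(a, - b)"] have "4 * (a \<bullet> a) / (1 - ?s)^2 + b * b = 0" by simp
    moreover have "4 * (a \<bullet> a) / (1 - ?s)^2 \<ge> 0" by simp
    moreover have "b * b \<ge> 0" by simp
    ultimately have "4 * (a \<bullet> a) / (1 - ?s)^2 = 0" "b * b = 0" by linarith+
    then have "a \<bullet> a = 0" "b = 0" using nz' by auto
    then have "a = 0" "b = 0" by auto
    then have "z' - ?z = 0" unfolding a_def b_def by (simp add: prod_eq_iff)
    then show ?thesis by simp
  qed
  show ?thesis unfolding christoffel_def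
    by (rule the_equality) (use zsat uniq in auto)
qed

definition mk :: "real^'m \<Rightarrow> real \<Rightarrow> real \<Rightarrow> real^'m^'m" where
  "mk x a b = (\<chi> i j. a * (if i = j then 1 else 0) + b * (x $ i * x $ j))"

lemma sum_delta_mult: fixes g :: "'n::finite \<Rightarrow> real" shows "(\<Sum>k\<in>UNIV. (if i = k then 1 else 0) * (g k :: real)) = g i"
proof -
  have "(\<Sum>k\<in>UNIV. (if i = k then 1 else 0) * (g k :: real)) = (\<Sum>k\<in>UNIV. if i = k then g k else 0)"
    by (rule sum.cong) auto
  then show ?thesis by (simp add: sum.delta')
qed

lemma sum_delta_mult2: fixes g :: "'n::finite \<Rightarrow> real" shows "(\<Sum>k\<in>UNIV. (g k :: real) * (if k = j then 1 else 0)) = g j"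
proof -
  have "(\<Sum>k\<in>UNIV. (g k :: real) * (if k = j then 1 else 0)) = (\<Sum>k\<in>UNIV. if k = j then g k else 0)"
    by (rule sum.cong) auto
  then show ?thesis by (simp add: sum.delta)
qed

lemma sum_sq: "(\<Sum>k\<in>UNIV. x $ k * x $ k) = x \<bullet> (x :: real^'m)"
  by (simp add: inner_vec_def)

lemma mk_mult: "mk x a1 b1 ** mk x a2 b2 = mk x (a1 * a2) (a1 * b2 + b1 * a2 + b1 * b2 * (x \<bullet> x))"
proof -
  have "(\<Sum>k\<in>UNIV. (a1 * (if i = k then 1 else 0) + b1 * (x $ i * x $ k)) * (a2 * (if k = j then 1 else 0) + b2 * (x $ k * x $ j)))
     = a1 * (a2 * (if i = j then 1 else 0)) + a1 * (b2 * (x $ i * x $ j)) + b1 * (x $ i * x $ j) * a2 + b1 * b2 * x $ i * x $ j * (x \<bullet> x)" for i j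
  proof -
    have "(\<Sum>k\<in>UNIV. (a1 * (if i = k then 1 else 0) + b1 * (x $ i * x $ k)) * (a2 * (if k = j then 1 else 0) + b2 * (x $ k * x $ j)))
      = (\<Sum>k\<in>UNIV. (if i = k then 1 else 0) * (a1 * (a2 * (if k = j then 1 else 0) + b2 * (x $ k * x $ j))))
      + (\<Sum>k\<in>UNIV. (b1 * x $ i * a2) * (x $ k * (if k = j then 1 else 0)))
      + (\<Sum>k\<in>UNIV. (b1 * b2 * x $ i * x $ j) * (x $ k * x $ k))"
      by (simp add: sum.distrib[symmetric] algebra_simps)
    also have "\<dots> = a1 * (a2 * (if i = j then 1 else 0) + b2 * (x $ i * x $ j)) + b1 * x $ i * a2 * x $ j
        + b1 * b2 * x $ i * x $ j * (x \<bullet> x)"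
      by (simp only: sum_delta_mult sum_delta_mult2 sum_distrib_left[symmetric] sum_sq)
    finally show ?thesis by (simp add: algebra_simps)
  qed
  then show ?thesis unfolding mk_def matrix_matrix_mult_def by (simp add: vec_eq_iff algebra_simps)
qed

lemma mat1_mk: "mat 1 = mk x 1 0"
  by (simp add: mk_def mat_def vec_eq_iff)

lemma matrix_inv_eq:
  fixes A B :: "real^'m^'m"
  assumes "A ** B = mat 1" "B ** A = mat 1"
  shows "matrix_inv A = B"
  unfolding matrix_inv_def
proof (rule some_equality)
  show "A ** B = mat 1 \<and> B ** A = mat 1" using assms by simp
next
  fix C assume "A ** C = mat 1 \<and> C ** A = mat 1"
  then have CA: "C ** A = mat 1" by simp
  have "C = C ** (A ** B)" using assms by simp
  also have "\<dots> = (C ** A) ** B" by (rule matrix_mul_assoc)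
  also have "\<dots> = B" using CA by simp
  finally show "C = B" .
qed

lemma mk_inv:
  fixes x :: "real^'m"
  assumes sg: "sg \<noteq> 0" and nz: "sg - a * (x \<bullet> x) \<noteq> 0"
  shows "matrix_inv (mk x sg (- a)) = mk x (1 / sg) (a / (sg * (sg - a * (x \<bullet> x))))"
proof (rule matrix_inv_eq)
  have e1: "sg * (a / (sg * (sg - a * (x \<bullet> x)))) + - a * (1 / sg) + - a * (a / (sg * (sg - a * (x \<bullet> x)))) * (x \<bullet> x) = 0"
    using sg nz by (simp add: field_simps)
  have e2: "1 / sg * - a + a / (sg * (sg - a * (x \<bullet> x))) * sg + a / (sg * (sg - a * (x \<bullet> x))) * - a * (x \<bullet> x) = 0"
    using sg nz by (simp add: field_simps)
  show "mk x sg (- a) ** mk x (1 / sg) (a / (sg * (sg - a * (x \<bullet> x)))) = mat 1"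
    unfolding mk_mult mat1_mk[of x] e1 using sg by simp
  show "mk x (1 / sg) (a / (sg * (sg - a * (x \<bullet> x)))) ** mk x sg (- a) = mat 1"
    unfolding mk_mult mat1_mk[of x] e2 using sg by simp
qed

lemma double_sum_mk:
  fixes x :: "real^'m"
  shows "(\<Sum>i\<in>UNIV. \<Sum>j\<in>UNIV. mk x g1 g2 $ i $ j * (A1 * (if i = j then 1 else 0) + A2 * (x $ i * x $ j)))
    = g1 * A1 * real CARD('m) + g1 * A2 * (x \<bullet> x) + g2 * A1 * (x \<bullet> x) + g2 * A2 * (x \<bullet> x)^2"
proof -
  have inner: "(\<Sum>j\<in>UNIV. mk x g1 g2 $ i $ j * (A1 * (if i = j then 1 else 0) + A2 * (x $ i * x $ j)))
     = g1 * A1 + g1 * A2 * (x $ i * x $ i) + g2 * A1 * (x $ i * x $ i) + g2 * A2 * (x $ i * x $ i) * (x \<bullet> x)" for i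
  proof -
    have "(\<Sum>j\<in>UNIV. mk x g1 g2 $ i $ j * (A1 * (if i = j then 1 else 0) + A2 * (x $ i * x $ j)))
      = (\<Sum>j\<in>UNIV. (if i = j then 1 else 0) * (g1 * A1 + g1 * A2 * (x $ i * x $ j) + g2 * A1 * (x $ i * x $ j)))
       + (\<Sum>j\<in>UNIV. (g2 * A2 * x $ i * x $ i) * (x $ j * x $ j))"
      unfolding sum.distrib[symmetric]
      by (rule sum.cong) (auto simp: mk_def algebra_simps)
    also have "\<dots> = g1 * A1 + g1 * A2 * (x $ i * x $ i) + g2 * A1 * (x $ i * x $ i) + g2 * A2 * x $ i * x $ i * (x \<bullet> x)"
      by (simp only: sum_delta_mult sum_distrib_left[symmetric] sum_sq)
    finally show ?thesis by (simp add: algebra_simps)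
  qed
  have "(\<Sum>i\<in>UNIV. g1 * A1 + g1 * A2 * (x $ i * x $ i) + g2 * A1 * (x $ i * x $ i) + g2 * A2 * (x $ i * x $ i) * (x \<bullet> x))
      = g1 * A1 * real CARD('m) + g1 * A2 * (\<Sum>i\<in>UNIV. x $ i * x $ i) + g2 * A1 * (\<Sum>i\<in>UNIV. x $ i * x $ i)
        + g2 * A2 * (x \<bullet> x) * (\<Sum>i\<in>UNIV. x $ i * x $ i)"
    by (simp add: sum.distrib sum_distrib_left algebra_simps)
  then show ?thesis unfolding inner sum_sq by (simp add: power2_eq_square algebra_simps)
qed

lemma lor_scale: "lor_metric p (c *\<^sub>R X) N = c * lor_metric p X N"
  unfolding lor_metric_alt by (simp add: algebra_simps)

lemma lor_add: "lor_metric p (X + Y) N = lor_metric p X N + lor_metric p Y N"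
  unfolding lor_metric_alt by (simp add: inner_add_left add_divide_distrib algebra_simps)

lemma lor_zero: "lor_metric p 0 N = 0"
  unfolding lor_metric_alt by simp

lemma lor_sum: "lor_metric p (\<Sum>i\<in>I. X i) N = (\<Sum>i\<in>I. lor_metric p (X i) N)"
proof (induction I rule: infinite_finite_induct)
  case (infinite A) then show ?case by (simp add: lor_zero)
next
  case empty then show ?case by (simp add: lor_zero)
next
  case (insert i I) then show ?case by (simp add: lor_add)
qed

lemma ball_inner: "x \<in> ball (0::real^'m) 1 \<Longrightarrow> x \<bullet> x < 1"
proof -
  assume "x \<in> ball 0 1"
  then have "norm x < 1" by simp
  then have "(norm x)^2 < 1" by (simp add: abs_square_less_1)
  then show ?thesis by (simp add: power2_norm_eq_inner)
qed

lemma alg_g: "(y::real) \<noteq> 0 \<Longrightarrow> 4 * (((y^2 / 4) * (2 * p))^2 * s) / y^2 = y^2 * p^2 * s"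
  by (simp add: field_simps power2_eq_square)

lemma alg_covN: "(y::real) \<noteq> 0 \<Longrightarrow> W \<noteq> 0 \<Longrightarrow>
  4 * ((2 / y) * (- (1 / W) * ((y^2 / 4) * (2 * p))) * (xi * xj + xj * xi - d * s)) / y^2 - 2 * (Pd * (2 * xi) * xj + p * d) * (- (1 / W))
  = (2 * p + 4 * p * s / y) / W * d + (4 * Pd - 8 * p / y) / W * (xi * xj)"
  by (simp add: field_simps power2_eq_square)

lemma alg_NN: "(y::real) \<noteq> 0 \<Longrightarrow> W \<noteq> 0 \<Longrightarrow> W^2 = 1 - y^2 * p^2 * s \<Longrightarrow>
  4 * ((- (1 / W) * ((y^2 / 4) * (2 * p))) * (- (1 / W) * ((y^2 / 4) * (2 * p))) * s) / y^2 - (- (1 / W)) * (- (1 / W)) = -1"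
  by (simp add: field_simps power2_eq_square)

lemma ax_nth: "axis i (1::real) $ j = (if j = i then 1 else 0)"
  by (simp add: axis_def)

context geo
begin

lemma induced_eq:
  assumes x: "x \<in> ball 0 1"
  shows "induced_metric f x = mk x (4 / (1 - x \<bullet> x)^2) (- (4 * (P (x \<bullet> x))^2))"
proof -
  have "induced_metric f x $ i $ j = 4 * (if i = j then 1 else 0) / (1 - x \<bullet> x)^2 - (P (x \<bullet> x) * (2 * x $ i)) * (P (x \<bullet> x) * (2 * x $ j))" for i j
    unfolding induced_metric_def
    by (simp add: F_fd[OF x] lor_metric_def hyp_metric_def graph_map_def inner_axis inner_axis_axis
      power2_norm_eq_inner ax_nth)
  then show ?thesis unfolding mk_def by (simp add: vec_eq_iff power2_eq_square algebra_simps)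
qed

lemma grad_eq:
  assumes x: "x \<in> ball 0 1"
  shows "hyp_grad f x = (((1 - x \<bullet> x)^2 / 4) * (2 * P (x \<bullet> x))) *\<^sub>R x"
  unfolding hyp_grad_def
  by (simp add: f_fd[OF x] vec_eq_iff inner_axis power2_norm_eq_inner algebra_simps)

lemma gradnorm_sq:
  assumes x: "x \<in> ball 0 1"
  shows "(hyp_grad_norm f x)^2 = (1 - x \<bullet> x)^2 * (P (x \<bullet> x))^2 * (x \<bullet> x)"
proof -
  have nz: "1 - x \<bullet> x \<noteq> 0" using ball_inner[OF x] by simp
  have "hyp_metric x (hyp_grad f x) (hyp_grad f x) = 4 * ((((1 - x \<bullet> x)^2 / 4) * (2 * P (x \<bullet> x)))^2 * (x \<bullet> x)) / (1 - x \<bullet> x)^2"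
    unfolding hyp_metric_def grad_eq[OF x] power2_norm_eq_inner by (simp add: power2_eq_square)
  also have "\<dots> = (1 - x \<bullet> x)^2 * (P (x \<bullet> x))^2 * (x \<bullet> x)"
    by (rule alg_g[OF nz])
  finally have e: "hyp_metric x (hyp_grad f x) (hyp_grad f x) = (1 - x \<bullet> x)^2 * (P (x \<bullet> x))^2 * (x \<bullet> x)" .
  have "0 \<le> (1 - x \<bullet> x)^2 * (P (x \<bullet> x))^2 * (x \<bullet> x)" by simp
  then show ?thesis unfolding hyp_grad_norm_def e by simp
qed

lemma normal_eq:
  assumes x: "x \<in> ball 0 1"
  shows "unit_normal f x = ((- (1 / sqrt (1 - (1 - x \<bullet> x)^2 * (P (x \<bullet> x))^2 * (x \<bullet> x))) * (((1 - x \<bullet> x)^2 / 4) * (2 * P (x \<bullet> x)))) *\<^sub>R x,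
       - (1 / sqrt (1 - (1 - x \<bullet> x)^2 * (P (x \<bullet> x))^2 * (x \<bullet> x))))"
  unfolding unit_normal_def gradnorm_sq[OF x] grad_eq[OF x] by simp

lemma cov_eq:
  assumes x: "x \<in> ball 0 1" and Pd: "(P has_real_derivative Pd) (at (x \<bullet> x))"
  shows "cov_deriv_imm lor_metric (graph_map f) x (axis i 1) (axis j 1) =
    ((2 / (1 - x \<bullet> x)) *\<^sub>R (x $ i *\<^sub>R axis j 1 + x $ j *\<^sub>R axis i 1 - (if i = j then 1 else 0) *\<^sub>R x),
     2 * (Pd * (2 * x $ i) * x $ j + P (x \<bullet> x) * (if i = j then 1 else 0)))"
proof -
  have pos: "1 - fst (graph_map f x) \<bullet> fst (graph_map f x) > 0"
    using ball_inner[OF x] by (simp add: graph_map_def)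
  show ?thesis
    unfolding cov_deriv_imm_def F_fd2[OF x Pd] christoffel_lor[OF pos] F_fd[OF x]
    by (simp add: graph_map_def inner_axis inner_axis_axis ax_nth)
qed

lemma lor_covN:
  assumes x: "x \<in> ball 0 1" and Pd: "(P has_real_derivative Pd) (at (x \<bullet> x))"
    and sl: "(1 - x \<bullet> x)^2 * (P (x \<bullet> x))^2 * (x \<bullet> x) < 1"
  shows "lor_metric (graph_map f x) (cov_deriv_imm lor_metric (graph_map f) x (axis i 1) (axis j 1)) (unit_normal f x)
    = (2 * P (x \<bullet> x) + 4 * P (x \<bullet> x) * (x \<bullet> x) / (1 - x \<bullet> x)) / sqrt (1 - (1 - x \<bullet> x)^2 * (P (x \<bullet> x))^2 * (x \<bullet> x)) * (if i = j then 1 else 0)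
      + (4 * Pd - 8 * P (x \<bullet> x) / (1 - x \<bullet> x)) / sqrt (1 - (1 - x \<bullet> x)^2 * (P (x \<bullet> x))^2 * (x \<bullet> x)) * (x $ i * x $ j)"
proof -
  let ?W = "sqrt (1 - (1 - x \<bullet> x)^2 * (P (x \<bullet> x))^2 * (x \<bullet> x))"
  have y: "1 - x \<bullet> x \<noteq> 0" using ball_inner[OF x] by simp
  have W: "?W \<noteq> 0" using sl by simp
  have ip: "(x $ i *\<^sub>R axis j 1 + x $ j *\<^sub>R axis i 1 - (if i = j then 1 else 0) *\<^sub>R x) \<bullet> x
      = x $ i * x $ j + x $ j * x $ i - (if i = j then 1 else 0) * (x \<bullet> x)"
    by (simp add: inner_add_left inner_diff_left inner_axis')
  let ?p = "P (x \<bullet> x)" and ?y = "1 - x \<bullet> x" and ?d = "if i = j then 1 else (0::real)"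
  let ?v = "x $ i *\<^sub>R axis j 1 + x $ j *\<^sub>R axis i 1 - ?d *\<^sub>R x"
  let ?nc = "- (1 / ?W) * ((?y^2 / 4) * (2 * ?p))"
  have "lor_metric (graph_map f x) (cov_deriv_imm lor_metric (graph_map f) x (axis i 1) (axis j 1)) (unit_normal f x)
     = 4 * (((2 / ?y) *\<^sub>R ?v) \<bullet> (?nc *\<^sub>R x)) / ?y^2 - (2 * (Pd * (2 * x $ i) * x $ j + ?p * ?d)) * (- (1 / ?W))"
    by (simp only: cov_eq[OF x Pd] normal_eq[OF x] lor_metric_alt graph_map_def fst_conv snd_conv)
  also have "\<dots> = 4 * ((2 / ?y) * ?nc * (x $ i * x $ j + x $ j * x $ i - ?d * (x \<bullet> x))) / ?y^2 - (2 * (Pd * (2 * x $ i) * x $ j + ?p * ?d)) * (- (1 / ?W))"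
    by (simp only: inner_scaleR_left inner_scaleR_right ip ac_simps)
  also have "\<dots> = (2 * ?p + 4 * ?p * (x \<bullet> x) / ?y) / ?W * ?d + (4 * Pd - 8 * ?p / ?y) / ?W * (x $ i * x $ j)"
    by (rule alg_covN[OF y W])
  finally show ?thesis .
qed

lemma lor_NN:
  assumes x: "x \<in> ball 0 1"
    and sl: "(1 - x \<bullet> x)^2 * (P (x \<bullet> x))^2 * (x \<bullet> x) < 1"
  shows "lor_metric (graph_map f x) (unit_normal f x) (unit_normal f x) = -1"
proof -
  let ?W = "sqrt (1 - (1 - x \<bullet> x)^2 * (P (x \<bullet> x))^2 * (x \<bullet> x))"
  have y: "1 - x \<bullet> x \<noteq> 0" using ball_inner[OF x] by simp
  have W: "?W \<noteq> 0" using sl by simp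
  have W2: "?W^2 = 1 - (1 - x \<bullet> x)^2 * (P (x \<bullet> x))^2 * (x \<bullet> x)" using sl by simp
  let ?p = "P (x \<bullet> x)" and ?y = "1 - x \<bullet> x"
  let ?nc = "- (1 / ?W) * ((?y^2 / 4) * (2 * ?p))"
  have "lor_metric (graph_map f x) (unit_normal f x) (unit_normal f x)
     = 4 * ((?nc *\<^sub>R x) \<bullet> (?nc *\<^sub>R x)) / ?y^2 - (- (1 / ?W)) * (- (1 / ?W))"
    by (simp only: normal_eq[OF x] lor_metric_alt graph_map_def fst_conv snd_conv)
  also have "\<dots> = 4 * (?nc * ?nc * (x \<bullet> x)) / ?y^2 - (- (1 / ?W)) * (- (1 / ?W))"
    by (simp only: inner_scaleR_left inner_scaleR_right ac_simps)
  also have "\<dots> = -1" by (rule alg_NN[OF y W W2])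
  finally show ?thesis .
qed

lemma mean_curv_eq:
  assumes x: "x \<in> ball 0 1" and Pd: "(P has_real_derivative Pd) (at (x \<bullet> x))"
    and sl: "(1 - x \<bullet> x)^2 * (P (x \<bullet> x))^2 * (x \<bullet> x) < 1"
  shows "lor_metric (graph_map f x) (mean_curv_vec f x) (unit_normal f x)
    = (1 / real CARD('m)) * (
       (1 / (4 / (1 - x \<bullet> x)^2)) * ((2 * P (x \<bullet> x) + 4 * P (x \<bullet> x) * (x \<bullet> x) / (1 - x \<bullet> x)) / sqrt (1 - (1 - x \<bullet> x)^2 * (P (x \<bullet> x))^2 * (x \<bullet> x))) * real CARD('m)
     + (1 / (4 / (1 - x \<bullet> x)^2)) * ((4 * Pd - 8 * P (x \<bullet> x) / (1 - x \<bullet> x)) / sqrt (1 - (1 - x \<bullet> x)^2 * (P (x \<bullet> x))^2 * (x \<bullet> x))) * (x \<bullet> x)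
     + ((4 * (P (x \<bullet> x))^2) / ((4 / (1 - x \<bullet> x)^2) * ((4 / (1 - x \<bullet> x)^2) - (4 * (P (x \<bullet> x))^2) * (x \<bullet> x))))
         * ((2 * P (x \<bullet> x) + 4 * P (x \<bullet> x) * (x \<bullet> x) / (1 - x \<bullet> x)) / sqrt (1 - (1 - x \<bullet> x)^2 * (P (x \<bullet> x))^2 * (x \<bullet> x))) * (x \<bullet> x)
     + ((4 * (P (x \<bullet> x))^2) / ((4 / (1 - x \<bullet> x)^2) * ((4 / (1 - x \<bullet> x)^2) - (4 * (P (x \<bullet> x))^2) * (x \<bullet> x))))
         * ((4 * Pd - 8 * P (x \<bullet> x) / (1 - x \<bullet> x)) / sqrt (1 - (1 - x \<bullet> x)^2 * (P (x \<bullet> x))^2 * (x \<bullet> x))) * (x \<bullet> x)^2)"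
proof -
  let ?s = "x \<bullet> x" and ?p = "P (x \<bullet> x)"
  let ?sg = "4 / (1 - ?s)^2" and ?a = "4 * ?p^2"
  let ?W = "sqrt (1 - (1 - ?s)^2 * ?p^2 * ?s)"
  let ?A1 = "(2 * ?p + 4 * ?p * ?s / (1 - ?s)) / ?W" and ?A2 = "(4 * Pd - 8 * ?p / (1 - ?s)) / ?W"
  let ?N = "unit_normal f x" and ?q = "graph_map f x"
  have y: "1 - ?s \<noteq> 0" using ball_inner[OF x] by simp
  have sg: "?sg \<noteq> 0" using y by simp
  have "?a * ?s < ?sg"
  proof -
    have "(1 - ?s)^2 * (?a * ?s) < 4" using sl by simp
    moreover have "(1 - ?s)^2 > 0" using y by simp
    ultimately show ?thesis by (simp add: field_simps)
  qed
  then have nz: "?sg - ?a * ?s \<noteq> 0" by simp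
  have inv: "matrix_inv (induced_metric f x) = mk x (1 / ?sg) (?a / (?sg * (?sg - ?a * ?s)))"
    unfolding induced_eq[OF x] by (rule mk_inv[OF sg nz])
  have NN: "lor_metric ?q ?N ?N = -1" by (rule lor_NN[OF x sl])
  have sffN: "lor_metric ?q (sff f x (axis i 1) (axis j 1)) ?N = ?A1 * (if i = j then 1 else 0) + ?A2 * (x $ i * x $ j)" for i j
    unfolding sff_def Let_def lor_scale NN lor_covN[OF x Pd sl] by simp
  have "lor_metric ?q (mean_curv_vec f x) ?N
     = (1 / real CARD('m)) * (\<Sum>i\<in>UNIV. \<Sum>j\<in>UNIV. mk x (1 / ?sg) (?a / (?sg * (?sg - ?a * ?s))) $ i $ j
          * (?A1 * (if i = j then 1 else 0) + ?A2 * (x $ i * x $ j)))"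
    unfolding mean_curv_vec_def lor_scale lor_sum inv sffN ..
  also have "\<dots> = (1 / real CARD('m)) * ((1 / ?sg) * ?A1 * real CARD('m) + (1 / ?sg) * ?A2 * ?s
       + (?a / (?sg * (?sg - ?a * ?s))) * ?A1 * ?s + (?a / (?sg * (?sg - ?a * ?s))) * ?A2 * ?s^2)"
    by (simp only: double_sum_mk)
  finally show ?thesis .
qed

end

definition psid :: "nat \<Rightarrow> real \<Rightarrow> real \<Rightarrow> real" where
  "psid m c s = (let B = Bf m c s; E = Bd m c s; R = sqrt (1 + s * B^2) in
     (E * ((1-s) * R) - B * (- R + (1-s) * ((B^2 + s * (2 * B * E)) / (2 * R)))) / (((1-s) * R) * ((1-s) * R)))"

lemma psi_deriv:
  assumes m: "m \<ge> 2" and s: "s \<in> Tdom m c"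
  shows "(psi m c has_real_derivative psid m c s) (at s)"
proof -
  have s1: "s \<in> {-1<..<1}" and R: "1 + s * (Bf m c s)^2 > 0" using s by (auto simp: Tdom_def)
  let ?B = "Bf m c s" and ?E = "Bd m c s"
  let ?R = "sqrt (1 + s * ?B^2)"
  have Rp: "?R > 0" using R by simp
  have d1: "((\<lambda>q. 1 + q * (Bf m c q)^2) has_real_derivative (?B^2 + s * (2 * ?B * ?E))) (at s)"
    by (auto intro!: derivative_eq_intros Bf_deriv[OF m s1] simp: power2_eq_square)
  have dR: "((\<lambda>q. sqrt (1 + q * (Bf m c q)^2)) has_real_derivative (?B^2 + s * (2 * ?B * ?E)) / (2 * ?R)) (at s)"
    using DERIV_chain2[OF DERIV_real_sqrt[OF R] d1] by (simp add: divide_simps mult.commute)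
  have dden: "((\<lambda>q. (1-q) * sqrt (1 + q * (Bf m c q)^2)) has_real_derivative
      (- ?R + (1-s) * ((?B^2 + s * (2 * ?B * ?E)) / (2 * ?R)))) (at s)"
    using DERIV_mult[OF DERIV_diff[OF DERIV_const[of 1] DERIV_ident] dR] by (simp add: mult.commute)
  have den: "(1 - s) * ?R \<noteq> 0" using s1 Rp by simp
  have "((\<lambda>q. Bf m c q / ((1-q) * sqrt (1 + q * (Bf m c q)^2))) has_real_derivative psid m c s) (at s)"
    using DERIV_divide[OF Bf_deriv[OF m s1] dden den] by (simp add: psid_def Let_def)
  moreover have "psi m c = (\<lambda>q. Bf m c q / ((1-q) * sqrt (1 + q * (Bf m c q)^2)))" by (rule ext) (simp add: psi_def)
  ultimately show ?thesis by simp
qed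

lemma key_alg:
  fixes y B E R c mm :: real
  assumes y: "y > 0" and R: "R > 0" and R2: "R^2 = 1 + (1 - y) * B^2" and mm: "mm > 0"
    and ode: "(1 - y) * E = c / y - mm / 2 * B - (mm - 1) * (1 - y) * B / y"
  shows "(1 / mm) * (
       (1 / (4 / y^2)) * ((2 * (B / (y * R)) + 4 * (B / (y * R)) * (1 - y) / y) / (1 / R)) * mm
     + (1 / (4 / y^2)) * ((4 * ((E * (y * R) - B * (- R + y * ((B^2 + (1 - y) * (2 * B * E)) / (2 * R)))) / ((y * R) * (y * R))) - 8 * (B / (y * R)) / y) / (1 / R)) * (1 - y)
     + ((4 * (B / (y * R))^2) / ((4 / y^2) * ((4 / y^2) - (4 * (B / (y * R))^2) * (1 - y))))
         * ((2 * (B / (y * R)) + 4 * (B / (y * R)) * (1 - y) / y) / (1 / R)) * (1 - y)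
     + ((4 * (B / (y * R))^2) / ((4 / y^2) * ((4 / y^2) - (4 * (B / (y * R))^2) * (1 - y))))
         * ((4 * ((E * (y * R) - B * (- R + y * ((B^2 + (1 - y) * (2 * B * E)) / (2 * R)))) / ((y * R) * (y * R))) - 8 * (B / (y * R)) / y) / (1 / R)) * (1 - y)^2)
    = c / mm"
proof -
  define s where "s = 1 - y"
  have yne: "y \<noteq> 0" and Rne: "R \<noteq> 0" using y R by auto
  have g2: "(4 * (B / (y * R))^2) / ((4 / y^2) * ((4 / y^2) - (4 * (B / (y * R))^2) * s)) = B^2 * y^2 / 4"
  proof -
    have "(4 / y^2) - (4 * (B / (y * R))^2) * s = 4 / (y^2 * R^2)"
      using yne Rne R2 by (simp add: s_def field_simps power2_eq_square) 
    then show ?thesis using yne Rne by (simp add: field_simps power2_eq_square)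
  qed
  have A1: "(2 * (B / (y * R)) + 4 * (B / (y * R)) * s / y) / (1 / R) = 2 * B * (1 + s) / y^2"
    using yne Rne by (simp add: s_def field_simps power2_eq_square)
  have A2: "((4 * ((E * (y * R) - B * (- R + y * ((B^2 + s * (2 * B * E)) / (2 * R)))) / ((y * R) * (y * R))) - 8 * (B / (y * R)) / y) / (1 / R)) * s
      = (4 * ((s * E) * y * R^2 + s * B * R^2 - B * y * (s * B^2 + 2 * s * B * (s * E)) / 2) - 8 * B * s * R^2) / (y^2 * R^2)"
    using yne Rne by (simp add: field_simps power2_eq_square)
  have T: "(1 / (4 / y^2)) * (2 * B * (1 + s) / y^2) * mm
     + (1 / (4 / y^2)) * ((4 * ((s * E) * y * R^2 + s * B * R^2 - B * y * (s * B^2 + 2 * s * B * (s * E)) / 2) - 8 * B * s * R^2) / (y^2 * R^2))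
     + (B^2 * y^2 / 4) * (2 * B * (1 + s) / y^2) * s
     + (B^2 * y^2 / 4) * ((4 * ((s * E) * y * R^2 + s * B * R^2 - B * y * (s * B^2 + 2 * s * B * (s * E)) / 2) - 8 * B * s * R^2) / (y^2 * R^2)) * s
     = c"
  proof -
    define X where "X = 4 * ((s * E) * y * R^2 + s * B * R^2 - B * y * (s * B^2 + 2 * s * B * (s * E)) / 2) - 8 * B * s * R^2"
    have ode': "s * E = c / y - mm / 2 * B - (mm - 1) * s * B / y" using ode by (simp add: s_def)
    have R2': "R^2 = 1 + s * B^2" using R2 by (simp add: s_def)
    have t1: "(1 / (4 / y^2)) * (X / (y^2 * R^2)) + (B^2 * y^2 / 4) * (X / (y^2 * R^2)) * s = X / 4"
    proof -
      have "(1 / (4 / y^2)) * (X / (y^2 * R^2)) + (B^2 * y^2 / 4) * (X / (y^2 * R^2)) * s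
          = X / (y^2 * R^2) * (y^2 * (1 + s * B^2) / 4)" using yne Rne by (simp add: field_simps)
      also have "\<dots> = X / 4" unfolding R2'[symmetric] using yne Rne by (simp add: field_simps)
      finally show ?thesis .
    qed
    have t2: "(1 / (4 / y^2)) * (2 * B * (1 + s) / y^2) * mm + (B^2 * y^2 / 4) * (2 * B * (1 + s) / y^2) * s + X / 4 = c"
      unfolding X_def R2' ode' using yne by (simp add: s_def field_simps power2_eq_square power3_eq_cube)
    show ?thesis using t1 t2 unfolding X_def[symmetric] by (simp add: algebra_simps)
  qed
  have "(1 / mm) * (
       (1 / (4 / y^2)) * ((2 * (B / (y * R)) + 4 * (B / (y * R)) * s / y) / (1 / R)) * mm
     + (1 / (4 / y^2)) * (((4 * ((E * (y * R) - B * (- R + y * ((B^2 + s * (2 * B * E)) / (2 * R)))) / ((y * R) * (y * R))) - 8 * (B / (y * R)) / y) / (1 / R)) * s)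
     + ((4 * (B / (y * R))^2) / ((4 / y^2) * ((4 / y^2) - (4 * (B / (y * R))^2) * s)))
         * ((2 * (B / (y * R)) + 4 * (B / (y * R)) * s / y) / (1 / R)) * s
     + ((4 * (B / (y * R))^2) / ((4 / y^2) * ((4 / y^2) - (4 * (B / (y * R))^2) * s)))
         * (((4 * ((E * (y * R) - B * (- R + y * ((B^2 + s * (2 * B * E)) / (2 * R)))) / ((y * R) * (y * R))) - 8 * (B / (y * R)) / y) / (1 / R)) * s) * s)
    = c / mm"
    unfolding g2 A1 A2 T using mm by simp
  then show ?thesis by (simp add: s_def power2_eq_square ac_simps)
qed

context geo
begin

lemma spacelike_pt:
  assumes x: "x \<in> ball 0 1" and sl: "(1 - x \<bullet> x)^2 * (P (x \<bullet> x))^2 * (x \<bullet> x) < 1" and u: "u \<noteq> 0"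
  shows "lor_metric (graph_map f x) (frechet_derivative (graph_map f) (at x) u) (frechet_derivative (graph_map f) (at x) u) > 0"
proof -
  let ?s = "x \<bullet> x" and ?p = "P (x \<bullet> x)"
  have y: "1 - ?s > 0" using ball_inner[OF x] by simp
  have uu: "u \<bullet> u > 0" using u by simp
  have cs: "(x \<bullet> u)^2 \<le> ?s * (u \<bullet> u)" by (rule Cauchy_Schwarz_ineq)
  have "(?p * (2 * (x \<bullet> u)))^2 = 4 * ?p^2 * (x \<bullet> u)^2" by (simp add: power_mult_distrib)
  also have "\<dots> \<le> 4 * ?p^2 * (?s * (u \<bullet> u))" using cs by (intro mult_left_mono) auto
  also have "\<dots> < 4 * (u \<bullet> u) / (1 - ?s)^2"
  proof -
    have "(1 - ?s)^2 * (4 * ?p^2 * (?s * (u \<bullet> u))) = 4 * (u \<bullet> u) * ((1 - ?s)^2 * ?p^2 * ?s)" by (simp add: algebra_simps)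
    also have "\<dots> < 4 * (u \<bullet> u) * 1" using sl uu by (intro mult_strict_left_mono) auto
    finally have "(1 - ?s)^2 * (4 * ?p^2 * (?s * (u \<bullet> u))) < 4 * (u \<bullet> u)" by simp
    moreover have "(1 - ?s)^2 > 0" using y by simp
    ultimately show ?thesis by (simp add: field_simps)
  qed
  finally have "(?p * (2 * (x \<bullet> u)))^2 < 4 * (u \<bullet> u) / (1 - ?s)^2" .
  then show ?thesis
    unfolding F_fd[OF x] lor_metric_alt by (simp add: graph_map_def power2_eq_square)
qed

end

lemma oms: "1 - (1 - s) = (s::real)" by simp

lemma alg_sl: "(y::real) \<noteq> 0 \<Longrightarrow> R \<noteq> 0 \<Longrightarrow> y^2 * (B / (y * R))^2 * s = s * B^2 / R^2"
  by (simp add: field_simps power2_eq_square)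

lemma psi_sq:
  assumes s: "0 \<le> s" "s < 1"
  shows "(1 - s)^2 * (psi m c s)^2 * s = s * (Bf m c s)^2 / (1 + s * (Bf m c s)^2)"
proof -
  let ?B = "Bf m c s"
  have R: "1 + s * ?B^2 > 0" using s by (simp add: add_pos_nonneg)
  have y: "1 - s \<noteq> 0" using s by simp
  have Rn: "sqrt (1 + s * ?B^2) \<noteq> 0" using R by simp
  show ?thesis unfolding psi_def alg_sl[OF y Rn] using R by simp
qed

lemma sl_psi:
  assumes s: "0 \<le> s" "s < 1"
  shows "(1 - s)^2 * (psi m c s)^2 * s < 1"
proof -
  let ?B = "Bf m c s"
  have R: "1 + s * ?B^2 > 0" using s by (simp add: add_pos_nonneg)
  have "(1 - s)^2 * (psi m c s)^2 * s = s * ?B^2 / (1 + s * ?B^2)" by (rule psi_sq[OF s])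
  also have "\<dots> < 1" using R by simp
  finally show ?thesis .
qed

lemma W_psi:
  assumes s: "0 \<le> s" "s < 1"
  shows "sqrt (1 - (1 - s)^2 * (psi m c s)^2 * s) = 1 / sqrt (1 + s * (Bf m c s)^2)"
proof -
  let ?B = "Bf m c s"
  have R: "1 + s * ?B^2 > 0" using s by (simp add: add_pos_nonneg)
  have "(1 - s)^2 * (psi m c s)^2 * s = s * ?B^2 / (1 + s * ?B^2)" by (rule psi_sq[OF s])
  then have "1 - (1 - s)^2 * (psi m c s)^2 * s = 1 / (1 + s * ?B^2)" using R by (simp add: field_simps)
  then show ?thesis by (simp add: real_sqrt_divide)
qed

theorem proposition1p3:
  fixes c :: real
  assumes "CARD('m) \<ge> 2"
  shows "smooth_on (ball_model :: (real^'m) set) (f_fun c)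
    \<and> (\<forall>d::real. spacelike_graph (\<lambda>x::real^'m. f_fun c x + d)
         \<and> (\<forall>x::real^'m\<in>ball_model. lor_metric (graph_map (\<lambda>y. f_fun c y + d) x)
               (mean_curv_vec (\<lambda>y. f_fun c y + d) x) (unit_normal (\<lambda>y. f_fun c y + d) x)
             = c / real CARD('m)))
    \<and> bij_betw (\<lambda>(x::real^'m, d). graph_map (\<lambda>y. f_fun c y + d) x)
         (ball_model \<times> UNIV) (ball_model \<times> UNIV)"
proof (intro conjI allI)
  note m = assms
  let ?m = "CARD('m)"
  show "smooth_on (ball_model :: (real^'m) set) (f_fun c)" by (rule f_fun_smooth[OF m])
  fix d :: real
  have sq: "x \<bullet> x \<in> {0..<1}" if "x \<in> ball (0::real^'m) 1" for x
    using ball_inner[OF that] by simp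
  interpret G: geo "\<lambda>y::real^'m. f_fun c y + d" "phi0 ?m c" "psi ?m c" "d - phi0 ?m c 0"
  proof
    fix y :: "real^'m" assume y: "y \<in> ball 0 1"
    show "f_fun c y + d = phi0 ?m c (y \<bullet> y) + (d - phi0 ?m c 0)"
      using f_fun_phi[OF m, of y c] y by (simp add: ball_model_def power2_norm_eq_inner)
    have "y \<bullet> y \<in> Ddom ?m c" using sq[OF y] Ddom_props(2) by blast
    then show "(phi0 ?m c has_real_derivative psi ?m c (y \<bullet> y)) (at (y \<bullet> y))" by (rule phi0_deriv)
  qed
  show "spacelike_graph (\<lambda>x::real^'m. f_fun c x + d)"
    unfolding spacelike_graph_def
  proof (intro ballI allI impI)
    fix x :: "real^'m" and u :: "real^'m" assume x: "x \<in> ball_model" and u: "u \<noteq> 0"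
    have x': "x \<in> ball 0 1" using x by (simp add: ball_model_def)
    have "(1 - x \<bullet> x)^2 * (psi ?m c (x \<bullet> x))^2 * (x \<bullet> x) < 1" using sq[OF x'] sl_psi by auto
    from G.spacelike_pt[OF x' this u]
    show "lor_metric (graph_map (\<lambda>x. f_fun c x + d) x) (frechet_derivative (graph_map (\<lambda>x. f_fun c x + d)) (at x) u)
        (frechet_derivative (graph_map (\<lambda>x. f_fun c x + d)) (at x) u) > 0" .
  qed
  show "\<forall>x::real^'m\<in>ball_model. lor_metric (graph_map (\<lambda>y. f_fun c y + d) x)
               (mean_curv_vec (\<lambda>y. f_fun c y + d) x) (unit_normal (\<lambda>y. f_fun c y + d) x)
             = c / real CARD('m)"
  proof
    fix x :: "real^'m" assume x: "x \<in> ball_model"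
    have x': "x \<in> ball 0 1" using x by (simp add: ball_model_def)
    define s where "s = x \<bullet> x"
    have s: "0 \<le> s" "s < 1" using sq[OF x'] by (auto simp: s_def)
    have m2: "?m \<ge> 2" by (rule m)
    have "s \<in> {0..<1}" using s by auto
    then have sT: "s \<in> Tdom ?m c" using Tdom_sub[of ?m c] by blast
    have Pd: "(psi ?m c has_real_derivative psid ?m c s) (at (x \<bullet> x))"
      using psi_deriv[OF m2 sT] by (simp add: s_def)
    have sl: "(1 - x \<bullet> x)^2 * (psi ?m c (x \<bullet> x))^2 * (x \<bullet> x) < 1" using sl_psi[OF s] by (simp add: s_def)
    note mc = G.mean_curv_eq[OF x' Pd sl, unfolded s_def[symmetric]]
    let ?B = "Bf ?m c s" and ?E = "Bd ?m c s"
    let ?R = "sqrt (1 + s * ?B^2)"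
    have R: "?R > 0" using s by (simp add: add_pos_nonneg)
    have R2: "?R^2 = 1 + s * ?B^2" using s by (simp add: add_nonneg_nonneg)
    have y: "1 - s > 0" using s by simp
    have mpos: "real ?m > 0" using m by simp
    have ode: "s * ?E = c / (1 - s) - real ?m / 2 * ?B - (real ?m - 1) * s * ?B / (1 - s)"
      using Bf_ode[OF m2, of s c] s m by (simp add: of_nat_diff)
    note K = key_alg[where y="1 - s" and B="?B" and E="?E" and R="?R" and c=c and mm="real ?m", unfolded oms, OF y R R2 mpos ode]
    show "lor_metric (graph_map (\<lambda>y. f_fun c y + d) x)
               (mean_curv_vec (\<lambda>y. f_fun c y + d) x) (unit_normal (\<lambda>y. f_fun c y + d) x)
             = c / real CARD('m)"
      unfolding mc W_psi[OF s] using K by (simp only: psi_def psid_def Let_def)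
  qed
next
  show "bij_betw (\<lambda>(x::real^'m, d). graph_map (\<lambda>y. f_fun c y + d) x)
         (ball_model \<times> UNIV) (ball_model \<times> UNIV)"
    by (rule bij_betw_byWitness[where f'="\<lambda>(x, t). (x, t - f_fun c x)"]) (auto simp: graph_map_def)
qed

end
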